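(* Let $\lambda=\Lambda_1(1-\sigma^2)$ with $\sigma>0$ small, and define $\hat K:\mathscr A(\mathcal S)\to C[-\pi,\pi]$ by $$(\hat K A)(t)=\int_{\mathbb R}L_1(t,p)\frac{A(p)}{(\lambda_1(\tau)-\lambda)(\lambda_2(\tau)-\lambda)}\,dp,\qquad\tau=\sqrt{k^2+p^2}.$$ Then the operator $\hat T_0A:=\hat KA-\frac1\sigma A(0)R_0(t)$, with $R_0(t)=-De^{\varepsilon kY(t)}$ and $$D=-e^{-ka}P_0(k,\Lambda_1)\frac{1}{\Lambda_2-\Lambda_1}\cdot\frac{k}{q_1\lambda_1'(k)},$$ is bounded from $\mathscr A(\mathcal S)$ to $C[-\pi,\pi]$ uniformly in $\sigma$ for small $\sigma$.
   Context: Fix $k>0$, $a>0$, $b>0$, $\beta\in(0,1)$, $\alpha=1-\beta$; $X,Y$ real $2\pi$-periodic smooth functions; $\varepsilon>0$ small. $\lambda_1(\tau)=\dfrac{\alpha\tau\tanh b\tau}{1+\beta\tanh b\tau}$, $\lambda_2(\tau)=\tau$, $\Lambda_1=\lambda_1(k)$, $\Lambda_2=k$, $q_1=\sqrt{2k\Lambda_1/\lambda_1'(k)}$, $$P_0(\tau,\lambda)=\frac{1-\beta\tanh\tau b}{1+\beta\tanh\tau b}(\lambda+\tau)\Big(\lambda-\frac{\alpha\tau\tanh\tau b}{1-\beta\tanh\tau b}\Big),$$ $L_1(t,p)=\frac1{2\pi}P_0(\tau,\lambda)e^{-(a-\varepsilon Y(t))\tau+ip\varepsilon X(t)}$. $\mathcal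 S$ is a fixed sufficiently narrow horizontal strip around $\mathbb R$ in which the only zeros of $(\lambda_1(\tau)-\lambda)(\lambda_2(\tau)-\lambda)$ are $p=\pm ip_{01}$ with $p_{01}=q_1\sigma+O(\sigma^2)$; $\mathscr A(\mathcal S)$ is the Banach space of bounded analytic functions on $\mathcal S$ with the sup norm. *)

theory Defs
  imports "HOL-Analysis.Analysis"
begin

text \<open>Dispersion branches: lam1 (depends on beta, b) and lam2 tau = tau.\<close>
definition lam1 :: "real \<Rightarrow> real \<Rightarrow> real \<Rightarrow> real" where
  "lam1 \<beta> b \<tau> = (1 - \<beta>) * \<tau> * tanh (b * \<tau>) / (1 + \<beta> * tanh (b * \<tau>))"

definition P0 :: "real \<Rightarrow> real \<Rightarrow> real \<Rightarrow> real \<Rightarrow> real" where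
  "P0 \<beta> b \<tau> l =
     (1 - \<beta> * tanh (\<tau> * b)) / (1 + \<beta> * tanh (\<tau> * b)) * (l + \<tau>)
     * (l - (1 - \<beta>) * \<tau> * tanh (\<tau> * b) / (1 - \<beta> * tanh (\<tau> * b)))"

text \<open>Lambda_1 = lam1(k), Lambda_2 = k, q_1 = sqrt(2 k Lambda_1 / lam1'(k)).\<close>
definition Lam1 :: "real \<Rightarrow> real \<Rightarrow> real \<Rightarrow> real" where
  "Lam1 \<beta> b k = lam1 \<beta> b k"

definition q1 :: "real \<Rightarrow> real \<Rightarrow> real \<Rightarrow> real" where
  "q1 \<beta> b k = sqrt (2 * k * Lam1 \<beta> b k / deriv (lam1 \<beta> b) k)"

definition L1 :: "real \<Rightarrow> real \<Rightarrow> real \<Rightarrow> real \<Rightarrow> real \<Rightarrow> (real \<Rightarrow> real) \<Rightarrow> (real \<Rightarrow> real)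
                   \<Rightarrow> real \<Rightarrow> real \<Rightarrow> real \<Rightarrow> complex" where
  "L1 \<beta> b k a \<epsilon> X Y l t p =
     (let \<tau> = sqrt (k^2 + p^2) in
       complex_of_real (1 / (2 * pi) * P0 \<beta> b \<tau> l * exp (- (a - \<epsilon> * Y t) * \<tau>))
       * exp (\<i> * complex_of_real (p * \<epsilon> * X t)))"

definition Kint :: "real \<Rightarrow> real \<Rightarrow> real \<Rightarrow> real \<Rightarrow> real \<Rightarrow> (real \<Rightarrow> real) \<Rightarrow> (real \<Rightarrow> real)
                   \<Rightarrow> real \<Rightarrow> (complex \<Rightarrow> complex) \<Rightarrow> real \<Rightarrow> real \<Rightarrow> complex" where
  "Kint \<beta> b k a \<epsilon> X Y l A t p =
     (let \<tau> = sqrt (k^2 + p^2) in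
       L1 \<beta> b k a \<epsilon> X Y l t p * A (complex_of_real p)
       / complex_of_real ((lam1 \<beta> b \<tau> - l) * (\<tau> - l)))"

definition Khat :: "real \<Rightarrow> real \<Rightarrow> real \<Rightarrow> real \<Rightarrow> real \<Rightarrow> (real \<Rightarrow> real) \<Rightarrow> (real \<Rightarrow> real)
                   \<Rightarrow> real \<Rightarrow> (complex \<Rightarrow> complex) \<Rightarrow> real \<Rightarrow> complex" where
  "Khat \<beta> b k a \<epsilon> X Y l A t = (LINT p|lborel. Kint \<beta> b k a \<epsilon> X Y l A t p)"

definition Dconst :: "real \<Rightarrow> real \<Rightarrow> real \<Rightarrow> real \<Rightarrow> real" where
  "Dconst \<beta> b k a =
     - exp (- k * a) * P0 \<beta> b k (Lam1 \<beta> b k) * (1 / (k - Lam1 \<beta> b k))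
     * (k / (q1 \<beta> b k * deriv (lam1 \<beta> b) k))"

definition R0 :: "real \<Rightarrow> real \<Rightarrow> real \<Rightarrow> real \<Rightarrow> real \<Rightarrow> (real \<Rightarrow> real) \<Rightarrow> real \<Rightarrow> real" where
  "R0 \<beta> b k a \<epsilon> Y t = - Dconst \<beta> b k a * exp (\<epsilon> * k * Y t)"

definition T0hat :: "real \<Rightarrow> real \<Rightarrow> real \<Rightarrow> real \<Rightarrow> real \<Rightarrow> (real \<Rightarrow> real) \<Rightarrow> (real \<Rightarrow> real)
                   \<Rightarrow> real \<Rightarrow> (complex \<Rightarrow> complex) \<Rightarrow> real \<Rightarrow> complex" where
  "T0hat \<beta> b k a \<epsilon> X Y \<sigma> A t =
     Khat \<beta> b k a \<epsilon> X Y (Lam1 \<beta> b k * (1 - \<sigma>^2)) A t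
     - complex_of_real (1 / \<sigma>) * A 0 * complex_of_real (R0 \<beta> b k a \<epsilon> Y t)"

definition strip :: "real \<Rightarrow> complex set" where
  "strip \<delta> = {p. \<bar>Im p\<bar> < \<delta>}"

definition smooth_real :: "(real \<Rightarrow> real) \<Rightarrow> bool" where
  "smooth_real f \<longleftrightarrow> (\<forall>n x. (deriv ^^ n) f differentiable (at x))"

end

theory Submission
  imports Defs "HOL-Complex_Analysis.Complex_Analysis" "HOL-Probability.Sinc_Integral"
begin


lemma cosh_ne0 [simp]: "cosh (x::real) \<noteq> 0"
  using cosh_real_pos[of x] by linarith

lemma T_deriv: "((\<lambda>s. tanh (b * s)) has_field_derivative (b * (1 - (tanh (b * s))^2))) (at (s::real))"
  by (auto intro!: derivative_eq_intros simp: algebra_simps)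

lemma onepbT_pos: "0 < \<beta> \<Longrightarrow> \<beta> < 1 \<Longrightarrow> 1 + \<beta> * tanh (x::real) > 0"
proof -
  assume "0 < \<beta>" "\<beta> < 1"
  have "tanh x > -1" by (rule tanh_real_gt_neg1)
  then have "\<beta> * tanh x > \<beta> * (-1)" using \<open>0<\<beta>\<close> by (intro mult_strict_left_mono) auto
  then show ?thesis using \<open>\<beta><1\<close> by linarith
qed

definition d1 :: "real \<Rightarrow> real \<Rightarrow> real \<Rightarrow> real" where
  "d1 \<beta> b s = (1 - \<beta>) * (tanh (b * s) / (1 + \<beta> * tanh (b * s)) + s * (b * (1 - (tanh (b * s))^2) / (1 + \<beta> * tanh (b * s))^2))"

lemma quot_alg: fixes \<beta> T s b :: real assumes "1 + \<beta> * T \<noteq> 0"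
  shows "(1 - \<beta>) * (((s * (b * (1 - T^2)) + 1 * T) * (1 + \<beta> * T) - (s * T) * (0 + \<beta> * (b * (1 - T^2)))) / ((1 + \<beta> * T) * (1 + \<beta> * T)))
   = (1 - \<beta>) * (T / (1 + \<beta> * T) + s * (b * (1 - T^2)) / (1 + \<beta> * T)^2)"
  using assms by (simp add: divide_simps power2_eq_square) algebra

lemma lam1_deriv:
  assumes "0 < \<beta>" "\<beta> < 1"
  shows "(lam1 \<beta> b has_field_derivative (d1 \<beta> b s)) (at s)"
proof -
  have p: "1 + \<beta> * tanh (b * s) \<noteq> 0" using onepbT_pos[OF assms] by (metis less_irrefl)
  have "((\<lambda>s. (1 - \<beta>) * ((s * tanh (b * s)) / (1 + \<beta> * tanh (b * s)))) has_field_derivative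
     ((1 - \<beta>) * (((s * (b * (1 - (tanh (b * s))^2)) + 1 * tanh (b * s)) * (1 + \<beta> * tanh (b * s)) - (s * tanh (b * s)) * (0 + \<beta> * (b * (1 - (tanh (b * s))^2)))) / ((1 + \<beta> * tanh (b * s)) * (1 + \<beta> * tanh (b * s)))))) (at s)"
    by (rule DERIV_cmult[OF DERIV_divide[OF DERIV_mult'[OF DERIV_ident T_deriv] DERIV_add[OF DERIV_const DERIV_cmult[OF T_deriv]] p]])
  moreover have "(\<lambda>s. (1 - \<beta>) * ((s * tanh (b * s)) / (1 + \<beta> * tanh (b * s)))) = lam1 \<beta> b"
    by (auto simp: lam1_def)
  ultimately show ?thesis using quot_alg[OF p, of s b] by (simp add: d1_def)
qed

lemma lam1_alt: "lam1 \<beta> b s = (1 - \<beta>) * s * (tanh (b * s) / (1 + \<beta> * tanh (b * s)))"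
  by (simp add: lam1_def)

lemma phi_mono:
  fixes \<beta> u v :: real assumes "0 < \<beta>" "0 \<le> u" "u \<le> v"
  shows "u / (1 + \<beta> * u) \<le> v / (1 + \<beta> * v)"
proof -
  have "0 < 1 + \<beta> * u" "0 < 1 + \<beta> * v" using assms by (auto intro: add_pos_nonneg)
  moreover have "u * (1 + \<beta> * v) \<le> v * (1 + \<beta> * u)" using assms by (simp add: algebra_simps)
  ultimately show ?thesis by (simp add: divide_simps)
qed

lemma lam1_lower:
  assumes "0 < \<beta>" "\<beta> < 1" "0 < b" "0 < k" "k \<le> s"
  shows "lam1 \<beta> b s - lam1 \<beta> b k \<ge> (lam1 \<beta> b k / k) * (s - k)"
proof -
  define pk where "pk = tanh (b * k) / (1 + \<beta> * tanh (b * k))"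
  define ps where "ps = tanh (b * s) / (1 + \<beta> * tanh (b * s))"
  have "tanh (b * k) \<le> tanh (b * s)" using assms by (simp add: mult_left_mono)
  moreover have "0 \<le> tanh (b * k)" using assms by simp
  ultimately have "pk \<le> ps" unfolding pk_def ps_def using assms by (intro phi_mono) auto
  have e: "lam1 \<beta> b s - lam1 \<beta> b k - (lam1 \<beta> b k / k) * (s - k) = (1 - \<beta>) * s * (ps - pk)"
    using assms unfolding lam1_alt pk_def[symmetric] ps_def[symmetric] by (simp add: field_simps)
  have "(1 - \<beta>) * s * (ps - pk) \<ge> 0" using assms \<open>pk \<le> ps\<close> by simp
  then show ?thesis using e by linarith
qed

lemma Lam_props:
  assumes "0 < \<beta>" "\<beta> < 1" "0 < b" "0 < k"
  shows "0 < lam1 \<beta> b k" "lam1 \<beta> b k < k" "0 < d1 \<beta> b k"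
proof -
  define T where "T = tanh (b * k)"
  have T: "0 < T" "T < 1" using assms by (auto simp: T_def tanh_real_lt_1)
  have D: "0 < 1 + \<beta> * T" using assms T by (auto intro: add_pos_pos)
  show "0 < lam1 \<beta> b k" using assms T D by (simp add: lam1_alt T_def[symmetric])
  have "(1 - \<beta>) * T < 1 + \<beta> * T"
  proof -
    have "(1 - \<beta>) * T < 1 * 1" using assms T by (intro mult_strict_mono) auto
    then show ?thesis using assms T by (smt (verit) mult_pos_pos)
  qed
  then have "(1 - \<beta>) * T / (1 + \<beta> * T) < 1" using D by simp
  then have "k * ((1 - \<beta>) * T / (1 + \<beta> * T)) < k * 1" using assms by (intro mult_strict_left_mono) auto
  then show "lam1 \<beta> b k < k" by (simp add: lam1_def T_def[symmetric] ac_simps)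
  have "0 < T / (1 + \<beta> * T)" using T D by simp
  moreover have "0 \<le> k * (b * (1 - T^2) / (1 + \<beta> * T)^2)" using assms T D
    by (intro mult_nonneg_nonneg divide_nonneg_nonneg) (auto simp: abs_square_le_1 power_le_one)
  ultimately show "0 < d1 \<beta> b k" using assms unfolding d1_def T_def[symmetric]
    by (intro mult_pos_pos) auto
qed

lemma d1_C1:
  assumes "0 < \<beta>" "\<beta> < 1"
  shows "\<exists>D. (\<forall>s. (d1 \<beta> b has_field_derivative D s) (at s)) \<and> continuous_on UNIV D"
proof -
  have p: "\<And>s. 1 + \<beta> * tanh (b * s) \<noteq> 0" using onepbT_pos[OF assms] by (metis less_irrefl)
  show ?thesis
    apply (rule exI)
    apply (rule conjI)
     apply (rule allI)
     apply (unfold d1_def[abs_def])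
     apply (rule derivative_eq_intros refl | simp add: p)+
    apply (intro continuous_intros)
    apply (auto simp: p)
    done
qed


lemma lip_param:
  fixes f D :: "'z::topological_space \<Rightarrow> real \<Rightarrow> real"
  assumes K: "compact K"
    and der: "\<And>z s. z \<in> K \<Longrightarrow> c \<le> s \<Longrightarrow> s \<le> d \<Longrightarrow> ((f z) has_field_derivative D z s) (at s)"
    and cont: "continuous_on (K \<times> {c..d}) (\<lambda>w. D (fst w) (snd w))"
  shows "\<exists>L. \<forall>z\<in>K. \<forall>s\<in>{c..d}. \<forall>s'\<in>{c..d}. \<bar>f z s - f z s'\<bar> \<le> L * \<bar>s - s'\<bar>"
proof -
  have "compact ((\<lambda>w. D (fst w) (snd w)) ` (K \<times> {c..d}))"
    by (intro compact_continuous_image cont compact_Times K compact_Icc)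
  then have "bounded ((\<lambda>w. D (fst w) (snd w)) ` (K \<times> {c..d}))" by (rule compact_imp_bounded)
  then obtain L where L0: "\<forall>x\<in>(\<lambda>w. D (fst w) (snd w)) ` (K \<times> {c..d}). norm x \<le> L"
    unfolding bounded_iff by blast
  have L: "\<bar>D (fst w) (snd w)\<bar> \<le> L" if "w \<in> K \<times> {c..d}" for w
    using L0 that by (metis image_eqI real_norm_def)
  have main: "\<bar>f z s' - f z s\<bar> \<le> L * \<bar>s' - s\<bar>" if z: "z \<in> K" and s: "s \<in> {c..d}" "s' \<in> {c..d}" "s < s'" for z s s'
  proof -
    have "\<And>x. s \<le> x \<Longrightarrow> x \<le> s' \<Longrightarrow> (f z has_field_derivative D z x) (at x)"
      using der[OF z] s by auto
    from MVT2[OF \<open>s < s'\<close> this]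
    obtain \<xi> where xi: "s < \<xi>" "\<xi> < s'" "f z s' - f z s = (s' - s) * D z \<xi>" by blast
    have "\<bar>D z \<xi>\<bar> \<le> L" using L[of "(z, \<xi>)"] z s xi by auto
    then have "\<bar>(s' - s) * D z \<xi>\<bar> \<le> \<bar>s' - s\<bar> * L" by (simp add: abs_mult mult_left_mono)
    then show ?thesis using xi by (simp add: mult.commute)
  qed
  have "\<bar>f z s - f z s'\<bar> \<le> L * \<bar>s - s'\<bar>" if z: "z \<in> K" and s: "s \<in> {c..d}" "s' \<in> {c..d}" for z s s'
  proof (cases s s' rule: linorder_cases)
    case less then show ?thesis using main[OF z s(1,2)] by (simp add: abs_minus_commute)
  next
    case equal then show ?thesis by simp
  next
    case greater then show ?thesis using main[OF z s(2,1)] by simp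
  qed
  then show ?thesis by blast
qed

lemma lam1_second:
  assumes "0 < \<beta>" "\<beta> < 1" "0 < k"
  shows "\<exists>B2. \<forall>s\<in>{k..k+1}. \<bar>lam1 \<beta> b s - lam1 \<beta> b k - d1 \<beta> b k * (s - k)\<bar> \<le> B2 * (s - k)^2"
proof -
  obtain D2 where D2: "\<And>s. (d1 \<beta> b has_field_derivative D2 s) (at s)" "continuous_on UNIV D2"
    using d1_C1[OF assms(1,2)] by blast
  have "continuous_on ({0::real} \<times> {k..k+1}) (\<lambda>w. D2 (snd w))"
    by (rule continuous_on_compose2[OF D2(2) continuous_on_snd]) auto
  then have "\<exists>L. \<forall>z\<in>{0::real}. \<forall>s\<in>{k..k+1}. \<forall>s'\<in>{k..k+1}. \<bar>(\<lambda>z. d1 \<beta> b) z s - (\<lambda>z. d1 \<beta> b) z s'\<bar> \<le> L * \<bar>s - s'\<bar>"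
    using lip_param[where f="\<lambda>z. d1 \<beta> b" and D="\<lambda>z. D2" and K="{0::real}" and c=k and d="k+1"] D2(1) by auto
  then obtain L where L: "\<And>s s'. s\<in>{k..k+1} \<Longrightarrow> s'\<in>{k..k+1} \<Longrightarrow> \<bar>d1 \<beta> b s - d1 \<beta> b s'\<bar> \<le> L * \<bar>s - s'\<bar>"
    by blast
  have "\<bar>lam1 \<beta> b s - lam1 \<beta> b k - d1 \<beta> b k * (s - k)\<bar> \<le> L * (s - k)^2" if s: "s\<in>{k..k+1}" for s
  proof (cases "s = k")
    case True then show ?thesis by simp
  next
    case False
    then have ks: "k < s" using s by auto
    define h where "h u = lam1 \<beta> b u - lam1 \<beta> b k - d1 \<beta> b k * (u - k)" for u
    have hd: "(h has_field_derivative (d1 \<beta> b u - d1 \<beta> b k)) (at u)" for u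
    proof -
      have "((\<lambda>u. lam1 \<beta> b u - lam1 \<beta> b k - d1 \<beta> b k * (u - k)) has_field_derivative (d1 \<beta> b u - 0 - d1 \<beta> b k * (1 - 0))) (at u)"
        by (rule DERIV_diff[OF DERIV_diff[OF lam1_deriv[OF assms(1,2)] DERIV_const] DERIV_cmult[OF DERIV_diff[OF DERIV_ident DERIV_const]]])
      then show ?thesis by (simp add: h_def[abs_def])
    qed
    obtain \<xi> where xi: "k < \<xi>" "\<xi> < s" "h s - h k = (s - k) * (d1 \<beta> b \<xi> - d1 \<beta> b k)"
      using MVT2[OF ks, of h "\<lambda>u. d1 \<beta> b u - d1 \<beta> b k"] hd by blast
    have "\<bar>d1 \<beta> b \<xi> - d1 \<beta> b k\<bar> \<le> L * \<bar>\<xi> - k\<bar>" using L[of \<xi> k] xi s by auto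
    also have "\<dots> \<le> L * (s - k)"
    proof -
      have "0 \<le> L * \<bar>s - k\<bar>" using L[of s k] s by (meson abs_ge_zero atLeastAtMost_iff order_trans less_eq_real_def ks)
      then have "0 \<le> L" using ks by (simp add: zero_le_mult_iff)
      then show ?thesis using xi by (intro mult_left_mono) auto
    qed
    finally have "\<bar>(s - k) * (d1 \<beta> b \<xi> - d1 \<beta> b k)\<bar> \<le> (s - k) * (L * (s - k))"
      using ks by (simp add: abs_mult mult_left_mono)
    then show ?thesis using xi by (simp add: h_def power2_eq_square ac_simps)
  qed
  then show ?thesis by blast
qed


lemma onembT_pos: "0 < \<beta> \<Longrightarrow> \<beta> < 1 \<Longrightarrow> 1 - \<beta> * tanh (x::real) > 0"
proof -
  assume "0 < \<beta>" "\<beta> < 1"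
  have "tanh x < 1" by (rule tanh_real_lt_1)
  then have "\<beta> * tanh x < \<beta> * 1" using \<open>0<\<beta>\<close> by (intro mult_strict_left_mono) auto
  then show ?thesis using \<open>\<beta><1\<close> by linarith
qed

definition gfun :: "real \<Rightarrow> real \<Rightarrow> real \<Rightarrow> real \<Rightarrow> real \<Rightarrow> real \<Rightarrow> real" where
  "gfun \<beta> b a l y s = P0 \<beta> b s l * exp (- (a - y) * s) / (2 * pi * (s - l))"

lemma P0_bound:
  assumes "0 < \<beta>" "\<beta> < 1" "0 < b" "0 \<le> l" "0 \<le> s"
  shows "\<bar>P0 \<beta> b s l\<bar> \<le> (l + s)^2"
proof -
  define T where "T = tanh (s * b)"
  have T: "0 \<le> T" "T < 1" using assms by (auto simp: T_def tanh_real_lt_1)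
  have D1: "0 < 1 + \<beta> * T" using assms T by (auto intro: add_pos_nonneg)
  have D2: "0 < 1 - \<beta> * T" using onembT_pos[OF assms(1,2)] by (simp add: T_def)
  have r: "0 \<le> (1 - \<beta> * T) / (1 + \<beta> * T)" "(1 - \<beta> * T) / (1 + \<beta> * T) \<le> 1"
    using D1 D2 T assms by (auto simp: divide_simps)
  have "(1 - \<beta>) * T \<le> 1 - \<beta> * T" using T by (simp add: algebra_simps)
  then have w1: "(1 - \<beta>) * s * T / (1 - \<beta> * T) \<le> s"
    using D2 assms by (simp add: divide_simps mult_left_mono) (metis mult.assoc mult.commute mult_left_mono)
  have w0: "0 \<le> (1 - \<beta>) * s * T / (1 - \<beta> * T)" using D2 assms T by simp
  have "\<bar>l - (1 - \<beta>) * s * T / (1 - \<beta> * T)\<bar> \<le> l + s" using w0 w1 assms by linarith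
  have "\<bar>P0 \<beta> b s l\<bar> = \<bar>(1 - \<beta> * T) / (1 + \<beta> * T)\<bar> * \<bar>l + s\<bar> * \<bar>l - (1 - \<beta>) * s * T / (1 - \<beta> * T)\<bar>"
    by (simp add: P0_def T_def abs_mult)
  also have "\<dots> \<le> 1 * (l + s) * (l + s)"
    using r D1 D2 assms \<open>\<bar>l - (1 - \<beta>) * s * T / (1 - \<beta> * T)\<bar> \<le> l + s\<close>
    by (intro mult_mono) auto
  finally show ?thesis by (simp add: power2_eq_square)
qed

lemma exp_ge_pow4: "0 \<le> (x::real) \<Longrightarrow> (x / 4)^4 \<le> exp x"
proof -
  assume x: "0 \<le> x"
  have "(x / 4)^4 \<le> (1 + x / 4)^4" using x by (intro power_mono) auto
  also have "\<dots> \<le> (exp (x / 4))^4" using x by (intro power_mono exp_ge_add_one_self) auto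
  also have "\<dots> = exp x" by (simp add: exp_of_nat_mult[symmetric])
  finally show ?thesis .
qed

definition Cgb :: "real \<Rightarrow> real \<Rightarrow> real \<Rightarrow> real" where
  "Cgb a k \<Lambda> = 4 * 4096 / (2 * pi * a^4 * (k - \<Lambda>)) * (1 + 1 / k^2)"

lemma g_bound:
  assumes "0 < \<beta>" "\<beta> < 1" "0 < b" "0 < a" "0 < k" "0 \<le> l" "l \<le> \<Lambda>" "\<Lambda> < k" "y \<le> a / 2"
  shows "\<bar>gfun \<beta> b a l y (sqrt (k^2 + p^2))\<bar> \<le> Cgb a k \<Lambda> / (1 + p^2)"
proof -
  define s where "s = sqrt (k^2 + p^2)"
  have s2: "s^2 = k^2 + p^2" unfolding s_def by simp
  have sk: "k \<le> s" unfolding s_def by (rule real_le_rsqrt) simp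
  have sp: "0 < s" using sk assms by linarith
  have P: "\<bar>P0 \<beta> b s l\<bar> \<le> (2 * s)^2"
  proof -
    have "\<bar>P0 \<beta> b s l\<bar> \<le> (l + s)^2" using P0_bound assms sp by auto
    also have "\<dots> \<le> (2 * s)^2" using assms sk by (intro power_mono) auto
    finally show ?thesis .
  qed
  have "(a / 2) * s \<le> (a - y) * s" using assms sp by (intro mult_right_mono) auto
  then have E: "exp (- (a - y) * s) \<le> exp (- (a / 2) * s)" by (simp add: algebra_simps)
  have E2: "exp (- (a / 2) * s) \<le> 1 / ((a * s / 2) / 4)^4"
  proof -
    have pos: "0 < ((a * s / 2) / 4)^4" using assms sp by simp
    have "((a * s / 2) / 4)^4 \<le> exp (a * s / 2)" using assms sp by (intro exp_ge_pow4) auto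
    then have "1 / exp (a * s / 2) \<le> 1 / ((a * s / 2) / 4)^4" using pos by (intro divide_left_mono) auto
    then show ?thesis by (simp add: exp_minus field_simps)
  qed
  have E3: "exp (- (a - y) * s) \<le> 1 / ((a * s / 2) / 4)^4" using E E2 by (rule order_trans)
  have den: "k - \<Lambda> \<le> s - l" using assms sk by linarith
  have kl: "0 < k - \<Lambda>" using assms by simp
  have "\<bar>gfun \<beta> b a l y s\<bar> = \<bar>P0 \<beta> b s l\<bar> * exp (- (a - y) * s) / (2 * pi * (s - l))"
    using den kl by (simp add: gfun_def abs_mult abs_divide)
  also have "\<dots> \<le> (2 * s)^2 * (1 / ((a * s / 2) / 4)^4) / (2 * pi * (k - \<Lambda>))"
    using P E3 den kl by (intro divide_mono mult_mono) auto
  also have "\<dots> = 4 * 4096 / (2 * pi * a^4 * (k - \<Lambda>)) * (1 / s^2)"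
    using sp assms by (simp add: field_simps power2_eq_square power4_eq_xxxx)
  also have "\<dots> \<le> 4 * 4096 / (2 * pi * a^4 * (k - \<Lambda>)) * ((1 + 1 / k^2) / (1 + p^2))"
  proof (intro mult_left_mono)
    have "1 + p^2 \<le> (1 + 1 / k^2) * s^2" using assms unfolding s2
      by (simp add: field_simps)
    then show "1 / s^2 \<le> (1 + 1 / k^2) / (1 + p^2)" using sp by (simp add: divide_simps add_pos_nonneg)
  qed (use assms kl in auto)
  finally show ?thesis unfolding Cgb_def s_def by (simp only: times_divide_eq_right)
qed


lemma gfun_s_C1:
  assumes "0 < \<beta>" "\<beta> < 1"
  shows "\<exists>D. (\<forall>l y s. l < s \<longrightarrow> ((gfun \<beta> b a l y) has_field_derivative D l y s) (at s))
          \<and> continuous_on {w::(real\<times>real)\<times>real. fst (fst w) < snd w} (\<lambda>w. D (fst (fst w)) (snd (fst w)) (snd w))"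
proof -
  have p: "\<And>x. 1 + \<beta> * tanh x \<noteq> 0" using onepbT_pos[OF assms] by (metis less_irrefl)
  have m: "\<And>x. 1 - \<beta> * tanh x \<noteq> 0" using onembT_pos[OF assms] by (metis less_irrefl)
  have m': "\<And>x. \<beta> * tanh x \<noteq> 1" using m by (metis eq_iff_diff_eq_0)
  show ?thesis
    apply (rule exI)
    apply (rule conjI)
     apply (intro allI impI)
     apply (unfold gfun_def[abs_def] P0_def)
     apply (rule derivative_eq_intros refl | (simp add: p m; fail) | rule m p)+
    apply (intro continuous_intros)
    apply (auto simp: p m m')
    done
qed


lemma gfun_l_C1:
  assumes "0 < \<beta>" "\<beta> < 1"
  shows "\<exists>D. (\<forall>y l. l < k \<longrightarrow> ((\<lambda>l. gfun \<beta> b a l y k) has_field_derivative D y l) (at l))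
          \<and> continuous_on {w::real\<times>real. snd w < k} (\<lambda>w. D (fst w) (snd w))"
proof -
  have p: "\<And>x. 1 + \<beta> * tanh x \<noteq> 0" using onepbT_pos[OF assms] by (metis less_irrefl)
  have m: "\<And>x. 1 - \<beta> * tanh x \<noteq> 0" using onembT_pos[OF assms] by (metis less_irrefl)
  have m': "\<And>x. \<beta> * tanh x \<noteq> 1" using m by (metis eq_iff_diff_eq_0)
  show ?thesis
    apply (rule exI)
    apply (rule conjI)
     apply (intro allI impI)
     apply (unfold gfun_def[abs_def] P0_def)
     apply (rule derivative_eq_intros refl | (simp add: p m m'; fail) | rule m p)+
    apply (intro continuous_intros)
    apply (auto simp: p m m')
    done
qed

lemma gfun_lip_s:
  assumes "0 < \<beta>" "\<beta> < 1" "\<Lambda> < k"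
  shows "\<exists>L. \<forall>l\<in>{0..\<Lambda>}. \<forall>y\<in>{-a/2..a/2}. \<forall>s\<in>{k..k+1}. \<bar>gfun \<beta> b a l y s - gfun \<beta> b a l y k\<bar> \<le> L * (s - k)"
proof -
  obtain D where D: "\<And>l y s. l < s \<Longrightarrow> ((gfun \<beta> b a l y) has_field_derivative D l y s) (at s)"
     "continuous_on {w::(real\<times>real)\<times>real. fst (fst w) < snd w} (\<lambda>w. D (fst (fst w)) (snd (fst w)) (snd w))"
    using gfun_s_C1[OF assms(1,2), of b a] by blast
  define K where "K = {0..\<Lambda>} \<times> {-a/2..a/2}"
  have "continuous_on (K \<times> {k..k+1}) (\<lambda>w. D (fst (fst w)) (snd (fst w)) (snd w))"
    by (rule continuous_on_subset[OF D(2)]) (use assms in \<open>auto simp: K_def\<close>)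
  moreover have "compact K" unfolding K_def by (intro compact_Times compact_Icc)
  moreover have "\<And>z s. z \<in> K \<Longrightarrow> k \<le> s \<Longrightarrow> s \<le> k + 1 \<Longrightarrow> ((\<lambda>s. gfun \<beta> b a (fst z) (snd z) s) has_field_derivative D (fst z) (snd z) s) (at s)"
    using D(1) assms by (auto simp: K_def)
  ultimately obtain L where L: "\<forall>z\<in>K. \<forall>s\<in>{k..k+1}. \<forall>s'\<in>{k..k+1}. \<bar>gfun \<beta> b a (fst z) (snd z) s - gfun \<beta> b a (fst z) (snd z) s'\<bar> \<le> L * \<bar>s - s'\<bar>"
    using lip_param[where f="\<lambda>z s. gfun \<beta> b a (fst z) (snd z) s" and D="\<lambda>z s. D (fst z) (snd z) s" and K=K and c=k and d="k+1"]
    by blast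
  show ?thesis
  proof (intro exI ballI)
    fix l y s assume "l \<in> {0..\<Lambda>}" "y \<in> {-a/2..a/2}" "s \<in> {k..k+1}"
    then show "\<bar>gfun \<beta> b a l y s - gfun \<beta> b a l y k\<bar> \<le> L * (s - k)"
      using L[rule_format, of "(l, y)" s k] by (auto simp: K_def)
  qed
qed

lemma gfun_lip_l:
  assumes "0 < \<beta>" "\<beta> < 1" "\<Lambda> < k"
  shows "\<exists>L. \<forall>y\<in>{-a/2..a/2}. \<forall>l\<in>{0..\<Lambda>}. \<forall>l'\<in>{0..\<Lambda>}. \<bar>gfun \<beta> b a l y k - gfun \<beta> b a l' y k\<bar> \<le> L * \<bar>l - l'\<bar>"
proof -
  obtain D where D: "\<And>y l. l < k \<Longrightarrow> ((\<lambda>l. gfun \<beta> b a l y k) has_field_derivative D y l) (at l)"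
     "continuous_on {w::real\<times>real. snd w < k} (\<lambda>w. D (fst w) (snd w))"
    using gfun_l_C1[OF assms(1,2), where b=b and a=a and k=k] by blast
  have "continuous_on ({-a/2..a/2} \<times> {0..\<Lambda>}) (\<lambda>w. D (fst w) (snd w))"
    by (rule continuous_on_subset[OF D(2)]) (use assms in auto)
  moreover have "\<And>z s. z \<in> {-a/2..a/2} \<Longrightarrow> 0 \<le> s \<Longrightarrow> s \<le> \<Lambda> \<Longrightarrow> ((\<lambda>l. gfun \<beta> b a l z k) has_field_derivative D z s) (at s)"
    using D(1) assms by auto
  ultimately show ?thesis
    using lip_param[where f="\<lambda>z l. gfun \<beta> b a l z k" and D=D and K="{-a/2..a/2}" and c=0 and d=\<Lambda>]
    by auto
qed


lemma open_strip: "open (strip \<delta>)"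
proof -
  have "strip \<delta> = {z. Im z < \<delta>} \<inter> {z. Im z > - \<delta>}" by (auto simp: strip_def)
  then show ?thesis by (simp add: open_Int open_halfspace_Im_lt open_halfspace_Im_gt)
qed

lemma ball_strip: "ball (0::complex) \<delta> \<subseteq> strip \<delta>"
proof
  fix z :: complex assume "z \<in> ball 0 \<delta>"
  then have "cmod z < \<delta>" by simp
  then show "z \<in> strip \<delta>" using abs_Im_le_cmod[of z] by (simp add: strip_def)
qed

lemma real_in_strip: "0 < \<delta> \<Longrightarrow> complex_of_real p \<in> strip \<delta>"
  by (simp add: strip_def)

lemma sym2:
  fixes B :: "complex \<Rightarrow> complex"
  assumes hol: "B holomorphic_on strip \<delta>" and bnd: "\<And>z. z \<in> strip \<delta> \<Longrightarrow> cmod (B z) \<le> Mb" and d: "0 < \<delta>"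
  shows "cmod (B (of_real p) + B (- of_real p) - 2 * B 0) \<le> 16 * Mb / \<delta>^2 * p^2"
proof (cases "\<delta> / 2 \<le> \<bar>p\<bar>")
  case True
  have Mb: "0 \<le> Mb" using bnd[of 0] d by (simp add: strip_def) (meson norm_ge_zero order_trans)
  have "cmod (B (of_real p) + B (- of_real p) - 2 * B 0) \<le> cmod (B (of_real p)) + cmod (B (- of_real p)) + 2 * cmod (B 0)"
  proof -
    have "cmod (B (of_real p) + B (- of_real p) - 2 * B 0) \<le> cmod (B (of_real p) + B (- of_real p)) + cmod (2 * B 0)"
      by (rule norm_triangle_ineq4)
    also have "\<dots> \<le> cmod (B (of_real p)) + cmod (B (- of_real p)) + cmod (2 * B 0)"
      using norm_triangle_ineq by (simp add: add_right_mono)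
    finally show ?thesis by (simp add: norm_mult)
  qed
  also have "\<dots> \<le> Mb + Mb + 2 * Mb"
    using bnd[of "of_real p"] bnd[of "- of_real p"] bnd[of 0] d by (simp add: strip_def)
  also have "\<dots> \<le> 16 * Mb / \<delta>^2 * p^2"
  proof -
    have "(\<delta> / 2)^2 \<le> p^2" using True d by (metis abs_ge_zero power2_abs power_mono less_imp_le half_gt_zero)
    then have "\<delta>^2 \<le> 4 * p^2" by (simp add: power_divide)
    then have "4 * Mb * \<delta>^2 \<le> 4 * Mb * (4 * p^2)" using Mb by (intro mult_left_mono) auto
    then show ?thesis using d by (simp add: field_simps)
  qed
  finally show ?thesis .
next
  case False
  define S where "S = ball (0::complex) (\<delta> / 2)"
  have op: "open (strip \<delta>)" by (rule open_strip)
  have Ssub: "S \<subseteq> strip \<delta>" using ball_strip[of \<delta>] d unfolding S_def by auto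
  define f where "f i = (deriv ^^ i) B" for i
  have hf: "f i holomorphic_on strip \<delta>" for i unfolding f_def by (rule holomorphic_higher_deriv[OF hol op])
  have fd: "(f i has_field_derivative f (Suc i) x) (at x within S)" if "x \<in> S" for i x
  proof -
    have "(f i has_field_derivative deriv (f i) x) (at x within S)"
      by (rule holomorphic_derivI[OF hf op]) (use that Ssub in auto)
    then show ?thesis by (simp add: f_def)
  qed
  have f2: "cmod (f (Suc 1) x) \<le> 8 * Mb / \<delta>^2" if x: "x \<in> S" for x
  proof -
    have cb: "cball x (\<delta> / 2) \<subseteq> strip \<delta>"
    proof
      fix w assume "w \<in> cball x (\<delta> / 2)"
      then have "dist x w \<le> \<delta> / 2" by simp
      moreover have "dist 0 x < \<delta> / 2" using x unfolding S_def by simp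
      moreover have "dist 0 w \<le> dist 0 x + dist x w" by (rule dist_triangle)
      ultimately have "dist 0 w < \<delta>" by linarith
      then have "cmod w < \<delta>" by simp
      then show "w \<in> strip \<delta>" using ball_strip[of \<delta>] by auto
    qed
    have "cmod ((deriv ^^ 2) B x) \<le> fact 2 * Mb / (\<delta> / 2)^2"
    proof (rule Cauchy_inequality)
      show "B holomorphic_on ball x (\<delta> / 2)" using hol cb ball_subset_cball holomorphic_on_subset by blast
      show "continuous_on (cball x (\<delta> / 2)) B" using hol cb holomorphic_on_imp_continuous_on continuous_on_subset by blast
      show "0 < \<delta> / 2" using d by simp
      show "cmod (B w) \<le> Mb" if "cmod (x - w) = \<delta> / 2" for w
        using bnd cb that by (auto simp: dist_norm)
    qed
    then show ?thesis by (simp add: f_def numeral_2_eq_2[symmetric] power_divide fact_numeral)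
  qed
  have T: "cmod (f 0 z - (\<Sum>i\<le>1. f i 0 * (z - 0) ^ i / fact i)) \<le> 8 * Mb / \<delta>^2 * cmod (z - 0) ^ Suc 1 / fact 1"
    if "z \<in> S" for z
    by (rule field_Taylor[where S=S and n=1 and f=f])
       (use fd f2 that d in \<open>auto simp: S_def convex_ball\<close>)
  have pS: "complex_of_real p \<in> S" "- complex_of_real p \<in> S" using False d by (auto simp: S_def)
  have T1: "cmod (B p - (B 0 + deriv B 0 * p)) \<le> 8 * Mb / \<delta>^2 * p^2"
    using T[OF pS(1)] by (simp add: f_def power2_eq_square norm_mult)
  have T2: "cmod (B (- p) - (B 0 - deriv B 0 * p)) \<le> 8 * Mb / \<delta>^2 * p^2"
    using T[OF pS(2)] by (simp add: f_def power2_eq_square norm_mult)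
  have "B (of_real p) + B (- of_real p) - 2 * B 0 = (B p - (B 0 + deriv B 0 * p)) + (B (- p) - (B 0 - deriv B 0 * p))"
    by (simp add: algebra_simps)
  then have "cmod (B (of_real p) + B (- of_real p) - 2 * B 0) \<le> cmod (B p - (B 0 + deriv B 0 * p)) + cmod (B (- p) - (B 0 - deriv B 0 * p))"
    by (metis norm_triangle_ineq)
  also have "\<dots> \<le> 16 * Mb / \<delta>^2 * p^2" using T1 T2 by simp
  finally show ?thesis .
qed


lemma cauchy_int:
  shows "integrable lborel (\<lambda>x::real. 1 / (1 + x^2))" and "(LINT x|lborel. 1 / (1 + x^2)) = pi"
proof -
  have "set_integrable lborel UNIV (\<lambda>x::real. inverse (1 + x^2))"
    using integrable_inverse_1_plus_square by simp
  then show "integrable lborel (\<lambda>x::real. 1 / (1 + x^2))"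
    by (simp add: set_integrable_def inverse_eq_divide)
  have "(LBINT x=-\<infinity>..\<infinity>. inverse (1 + x^2)) = pi" by (rule LBINT_inverse_1_plus_square)
  then show "(LINT x|lborel. 1 / (1 + x^2)) = pi"
    by (simp add: interval_lebesgue_integral_def set_lebesgue_integral_def inverse_eq_divide)
qed

lemma int_lorentz:
  fixes A0 r :: real assumes "0 < A0" "0 < r"
  shows "integrable lborel (\<lambda>p. 1 / (A0 * (1 + (p / r)^2)))"
    and "(LINT p|lborel. 1 / (A0 * (1 + (p / r)^2))) = pi * r / A0"
proof -
  have e: "(\<lambda>p. 1 / (A0 * (1 + (p / r)^2))) = (\<lambda>p. (1 / A0) * ((\<lambda>x. 1 / (1 + x^2)) (0 + (1 / r) * p)))"
    by (auto simp: field_simps)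
  have i1: "integrable lborel (\<lambda>p. (\<lambda>x::real. 1 / (1 + x^2)) (0 + (1 / r) * p))"
    using lborel_integrable_real_affine[OF cauchy_int(1), of "1 / r" 0] assms by simp
  then show "integrable lborel (\<lambda>p. 1 / (A0 * (1 + (p / r)^2)))" unfolding e by (rule integrable_mult_right)
  have "pi = \<bar>1 / r\<bar> *\<^sub>R (LINT p|lborel. (\<lambda>x::real. 1 / (1 + x^2)) (0 + (1 / r) * p))"
    using lborel_integral_real_affine[where c="1 / r" and f="\<lambda>x::real. 1 / (1 + x^2)" and t=0] cauchy_int(2) assms by simp
  then have "(LINT p|lborel. (\<lambda>x::real. 1 / (1 + x^2)) (0 + (1 / r) * p)) = pi * r"
    using assms by (simp add: field_simps)
  then show "(LINT p|lborel. 1 / (A0 * (1 + (p / r)^2))) = pi * r / A0" unfolding e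
    by (simp only: integral_mult_right_zero) simp
qed

lemma int_reflect:
  fixes f :: "real \<Rightarrow> 'a::{banach, second_countable_topology}"
  shows "(LINT x|lborel. f (- x)) = (LINT x|lborel. f x)"
    and "integrable lborel (\<lambda>x. f (- x)) \<longleftrightarrow> integrable lborel f"
proof -
  show "(LINT x|lborel. f (- x)) = (LINT x|lborel. f x)"
    using lborel_integral_real_affine[where c="-1" and f=f and t=0] by simp
  show "integrable lborel (\<lambda>x. f (- x)) \<longleftrightarrow> integrable lborel f"
    using lborel_integrable_real_affine_iff[where c="-1" and t=0 and f=f] by simp
qed

lemma tau_facts:
  fixes k p :: real assumes "0 < k"
  defines "s \<equiv> sqrt (k^2 + p^2)"
  shows "k \<le> s" "s^2 = k^2 + p^2" "p^2 = (s - k) * (s + k)" "s - k \<le> p^2 / (2 * k)"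
    "p^2 \<le> 1 \<Longrightarrow> s \<le> k + 1" "p^2 \<le> 1 \<Longrightarrow> p^2 / (2 * k + 1) \<le> s - k"
    "1 \<le> p^2 \<Longrightarrow> sqrt (k^2 + 1) \<le> s"
proof -
  show ks: "k \<le> s" unfolding s_def by (rule real_le_rsqrt) simp
  show s2: "s^2 = k^2 + p^2" unfolding s_def by simp
  show p2: "p^2 = (s - k) * (s + k)" using s2 by (simp add: algebra_simps power2_eq_square)
  show "s - k \<le> p^2 / (2 * k)"
  proof -
    have "(s - k) * (2 * k) \<le> p^2" unfolding p2 using ks by (intro mult_left_mono) auto
    then show ?thesis using \<open>0 < k\<close> by (simp add: pos_le_divide_eq)
  qed
  show sk1: "s \<le> k + 1" if "p^2 \<le> 1"
  proof -
    have e: "(k + 1)^2 = k^2 + 2 * k + 1" by (simp add: power2_eq_square algebra_simps)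
    have "s^2 \<le> (k + 1)^2" using s2 that \<open>0 < k\<close> e by linarith
    moreover have "0 \<le> k + 1" using \<open>0 < k\<close> by simp
    ultimately show ?thesis by (rule power2_le_imp_le)
  qed
  show "p^2 / (2 * k + 1) \<le> s - k" if "p^2 \<le> 1"
  proof -
    have "p^2 \<le> (s - k) * (2 * k + 1)" unfolding p2 using ks sk1[OF that] by (intro mult_left_mono) auto
    then show ?thesis using \<open>0 < k\<close> by (simp add: pos_divide_le_eq)
  qed
  show "sqrt (k^2 + 1) \<le> s" if "1 \<le> p^2" unfolding s_def using that by simp
qed


lemma key_near:
  fixes g g0 E Q Cg Lg Cq m dq KF M p :: real and Bp Bm A0 :: complex
  assumes E: "0 < E" "m * p^2 \<le> E" "0 < m"
    and Q: "0 < Q" "dq * p^2 \<le> Q" "0 < dq"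
    and g: "\<bar>g\<bar> \<le> Cg" "\<bar>g0\<bar> \<le> Cg" "\<bar>g - g0\<bar> \<le> Lg * p^2" "0 \<le> Lg"
    and QE: "\<bar>Q - E\<bar> \<le> Cq * p^2 * p^2" "0 \<le> Cq"
    and F: "cmod (Bp + Bm - 2 * A0) \<le> KF * p^2" "0 \<le> KF"
    and A: "cmod A0 \<le> M"
  shows "cmod (complex_of_real (g / E) * (Bp + Bm) - 2 * A0 * complex_of_real (g0 / Q))
         \<le> Cg * KF / m + 2 * M * (Lg / m + Cg * Cq / (m * dq))"
proof -
  have Cg: "0 \<le> Cg" using g(1) by linarith
  have M: "0 \<le> M" using A norm_ge_zero order_trans by blast
  have p2E: "p^2 \<le> E / m" using E by (simp add: pos_le_divide_eq mult.commute)
  have p2Q: "p^2 \<le> Q / dq" using Q by (simp add: pos_le_divide_eq mult.commute)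
  have eq: "complex_of_real (g / E) * (Bp + Bm) - 2 * A0 * complex_of_real (g0 / Q)
     = complex_of_real (g / E) * (Bp + Bm - 2 * A0) + 2 * A0 * complex_of_real ((g - g0) / E + g0 * (Q - E) / (E * Q))"
  proof -
    have "g / E - g0 / Q = (g - g0) / E + g0 * (Q - E) / (E * Q)" using E Q by (simp add: field_simps)
    then have "complex_of_real (g / E) - complex_of_real (g0 / Q) = complex_of_real ((g - g0) / E + g0 * (Q - E) / (E * Q))"
      by (metis of_real_diff)
    moreover have "\<And>u v x y :: complex. u * x - 2 * y * v = u * (x - 2 * y) + 2 * y * (u - v)"
      by (simp add: algebra_simps)
    ultimately show ?thesis by metis
  qed
  have t1: "cmod (complex_of_real (g / E) * (Bp + Bm - 2 * A0)) \<le> Cg * KF / m"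
  proof -
    have "cmod (Bp + Bm - 2 * A0) \<le> KF * (E / m)" using F p2E by (meson mult_left_mono order_trans)
    then have "cmod (Bp + Bm - 2 * A0) / E \<le> KF / m" using E by (simp add: divide_simps mult.commute)
    moreover have "cmod (complex_of_real (g / E) * (Bp + Bm - 2 * A0)) = \<bar>g\<bar> * (cmod (Bp + Bm - 2 * A0) / E)"
    proof -
      have "cmod (complex_of_real (g / E) * (Bp + Bm - 2 * A0)) = \<bar>g / E\<bar> * cmod (Bp + Bm - 2 * A0)"
        by (simp only: norm_mult norm_of_real)
      also have "\<dots> = \<bar>g\<bar> * (cmod (Bp + Bm - 2 * A0) / E)" using E by (simp add: abs_divide)
      finally show ?thesis .
    qed
    ultimately show ?thesis using g(1) Cg F(2) E
      by (metis (no_types, opaque_lifting) mult_mono norm_ge_zero divide_nonneg_pos less_imp_le times_divide_eq_right)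
  qed
  have t2a: "\<bar>(g - g0) / E\<bar> \<le> Lg / m"
  proof -
    have "\<bar>g - g0\<bar> \<le> Lg * (E / m)" using g p2E by (meson mult_left_mono order_trans)
    then show ?thesis using E by (simp add: abs_divide divide_simps mult.commute)
  qed
  have t2b: "\<bar>g0 * (Q - E) / (E * Q)\<bar> \<le> Cg * Cq / (m * dq)"
  proof -
    have "\<bar>Q - E\<bar> \<le> Cq * (E / m) * (Q / dq)"
    proof -
      have "Cq * p^2 * p^2 \<le> Cq * (E / m) * (Q / dq)"
        using p2E p2Q QE(2) E Q by (intro mult_mono) (auto intro: mult_nonneg_nonneg)
      then show ?thesis using QE(1) by linarith
    qed
    then have "\<bar>Q - E\<bar> / (E * Q) \<le> Cq / (m * dq)" using E Q by (simp add: divide_simps)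
    then have "\<bar>g0\<bar> * (\<bar>Q - E\<bar> / (E * Q)) \<le> Cg * (Cq / (m * dq))"
      using g(2) by (intro mult_mono) (auto intro: divide_nonneg_pos simp: E Q)
    then show ?thesis using E Q by (simp add: abs_divide abs_mult)
  qed
  have "cmod (complex_of_real (g / E) * (Bp + Bm) - 2 * A0 * complex_of_real (g0 / Q))
      \<le> cmod (complex_of_real (g / E) * (Bp + Bm - 2 * A0)) + cmod (2 * A0 * complex_of_real ((g - g0) / E + g0 * (Q - E) / (E * Q)))"
    unfolding eq by (rule norm_triangle_ineq)
  also have "\<dots> \<le> Cg * KF / m + 2 * M * (Lg / m + Cg * Cq / (m * dq))"
  proof -
    have r: "\<bar>(g - g0) / E + g0 * (Q - E) / (E * Q)\<bar> \<le> Lg / m + Cg * Cq / (m * dq)"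
      using t2a t2b by linarith
    have "cmod (2 * A0 * complex_of_real ((g - g0) / E + g0 * (Q - E) / (E * Q))) = 2 * (cmod A0 * \<bar>(g - g0) / E + g0 * (Q - E) / (E * Q)\<bar>)"
      by (simp only: norm_mult norm_of_real norm_numeral mult.assoc)
    also have "\<dots> \<le> 2 * (M * (Lg / m + Cg * Cq / (m * dq)))"
      using mult_mono[OF A r M abs_ge_zero] by simp
    finally have "cmod (2 * A0 * complex_of_real ((g - g0) / E + g0 * (Q - E) / (E * Q))) \<le> 2 * M * (Lg / m + Cg * Cq / (m * dq))"
      by simp
    then show ?thesis using t1 by linarith
  qed
  finally show ?thesis .
qed

lemma key_far:
  fixes g g0 E Q Cg e1 dqh Mb M p :: real and Bp Bm A0 :: complex
  assumes E: "0 < e1" "e1 \<le> E"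
    and Q: "0 < dqh" "dqh * (1 + p^2) \<le> Q"
    and g: "\<bar>g\<bar> \<le> Cg / (1 + p^2)" "\<bar>g0\<bar> \<le> Cg"
    and B: "cmod Bp \<le> Mb" "cmod Bm \<le> Mb" "cmod A0 \<le> M"
  shows "cmod (complex_of_real (g / E) * (Bp + Bm) - 2 * A0 * complex_of_real (g0 / Q))
         \<le> (2 * Cg * Mb / e1 + 2 * M * Cg / dqh) / (1 + p^2)"
proof -
  have P: "0 < 1 + p^2" by (simp add: add_pos_nonneg)
  have Cg: "0 \<le> Cg" using g(2) by linarith
  have Mb: "0 \<le> Mb" using B(1) norm_ge_zero order_trans by blast
  have M: "0 \<le> M" using B(3) norm_ge_zero order_trans by blast
  have Qp: "0 < Q" using Q P by (smt (verit) mult_pos_pos)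
  have t1: "cmod (complex_of_real (g / E) * (Bp + Bm)) \<le> 2 * Cg * Mb / e1 / (1 + p^2)"
  proof -
    have f1: "cmod (Bp + Bm) \<le> 2 * Mb" using B norm_triangle_ineq[of Bp Bm] by linarith
    have f2: "\<bar>g / E\<bar> \<le> (Cg / (1 + p^2)) / e1"
    proof -
      have "\<bar>g\<bar> / E \<le> (Cg / (1 + p^2)) / e1" by (rule frac_le) (use g E Cg P in auto)
      then show ?thesis using E by (simp add: abs_divide)
    qed
    have f3: "0 \<le> (Cg / (1 + p^2)) / e1" using Cg P E by simp
    have "\<bar>g / E\<bar> * cmod (Bp + Bm) \<le> (Cg / (1 + p^2)) / e1 * (2 * Mb)"
      by (rule mult_mono[OF f2 f1 f3 norm_ge_zero])
    moreover have "cmod (complex_of_real (g / E) * (Bp + Bm)) = \<bar>g / E\<bar> * cmod (Bp + Bm)"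
      by (simp only: norm_mult norm_of_real)
    moreover have "(Cg / (1 + p^2)) / e1 * (2 * Mb) = 2 * Cg * Mb / e1 / (1 + p^2)" by (simp add: ac_simps)
    ultimately show ?thesis by simp
  qed
  have t2: "cmod (2 * A0 * complex_of_real (g0 / Q)) \<le> 2 * M * Cg / dqh / (1 + p^2)"
  proof -
    have "\<bar>g0 / Q\<bar> \<le> Cg / (dqh * (1 + p^2))"
    proof -
      have "\<bar>g0\<bar> / Q \<le> Cg / (dqh * (1 + p^2))" by (rule frac_le) (use g Q Qp P Cg in auto)
      then show ?thesis using Qp by (simp add: abs_divide)
    qed
    moreover have "2 * cmod A0 \<le> 2 * M" using B(3) by simp
    ultimately have "2 * cmod A0 * \<bar>g0 / Q\<bar> \<le> 2 * M * (Cg / (dqh * (1 + p^2)))"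
      using M by (metis abs_ge_zero mult_mono mult_nonneg_nonneg zero_le_numeral)
    moreover have "cmod (2 * A0 * complex_of_real (g0 / Q)) = 2 * cmod A0 * \<bar>g0 / Q\<bar>"
      by (simp only: norm_mult norm_of_real norm_numeral)
    moreover have "2 * M * (Cg / (dqh * (1 + p^2))) = 2 * M * Cg / dqh / (1 + p^2)" by (simp add: ac_simps)
    ultimately show ?thesis by simp
  qed
  have "cmod (complex_of_real (g / E) * (Bp + Bm) - 2 * A0 * complex_of_real (g0 / Q))
     \<le> cmod (complex_of_real (g / E) * (Bp + Bm)) + cmod (2 * A0 * complex_of_real (g0 / Q))"
    by (rule norm_triangle_ineq4)
  also have "\<dots> \<le> 2 * Cg * Mb / e1 / (1 + p^2) + 2 * M * Cg / dqh / (1 + p^2)" using t1 t2 by linarith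
  also have "\<dots> = (2 * Cg * Mb / e1 + 2 * M * Cg / dqh) / (1 + p^2)" by (rule add_divide_distrib[symmetric])
  finally show ?thesis .
qed


lemma sqrt_k2: "0 < k \<Longrightarrow> sqrt (k^2 + (0::real)^2) = k"
  by simp

lemma E_lower:
  assumes "0 < \<beta>" "\<beta> < 1" "0 < b" "0 < k"
  shows "lam1 \<beta> b (sqrt (k^2 + p^2)) - lam1 \<beta> b k \<ge> (lam1 \<beta> b k / k) * (sqrt (k^2 + p^2) - k)"
    and "(lam1 \<beta> b k / k) * (sqrt (k^2 + p^2) - k) \<ge> 0"
proof -
  have ks: "k \<le> sqrt (k^2 + p^2)" using tau_facts(1)[OF assms(4)] by simp
  show "lam1 \<beta> b (sqrt (k^2 + p^2)) - lam1 \<beta> b k \<ge> (lam1 \<beta> b k / k) * (sqrt (k^2 + p^2) - k)"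
    by (rule lam1_lower[OF assms ks])
  show "(lam1 \<beta> b k / k) * (sqrt (k^2 + p^2) - k) \<ge> 0"
    using Lam_props[OF assms] ks assms by simp
qed

lemma gfun_cont:
  assumes "0 < \<beta>" "\<beta> < 1" "0 < k" "l < k"
  shows "continuous_on UNIV (\<lambda>p::real. gfun \<beta> b a l y (sqrt (k^2 + p^2)))"
proof -
  have p: "\<And>x. 1 + \<beta> * tanh x \<noteq> 0" using onepbT_pos[OF assms(1,2)] by (metis less_irrefl)
  have m: "\<And>x. 1 - \<beta> * tanh x \<noteq> 0" using onembT_pos[OF assms(1,2)] by (metis less_irrefl)
  have m': "\<And>x. \<beta> * tanh x \<noteq> 1" using m by (metis eq_iff_diff_eq_0)
  have s: "\<And>p::real. sqrt (k^2 + p^2) - l \<noteq> 0"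
    using tau_facts(1)[OF assms(3)] assms(4) by (metis less_le_trans eq_iff_diff_eq_0 less_irrefl)
  have c1: "continuous_on {l<..} (gfun \<beta> b a l y)"
    unfolding gfun_def[abs_def] P0_def
    apply (intro continuous_intros)
    apply (auto simp: p m m')
    done
  have c2: "continuous_on UNIV (\<lambda>p::real. sqrt (k^2 + p^2))" by (intro continuous_intros)
  have "(\<lambda>p::real. sqrt (k^2 + p^2)) ` UNIV \<subseteq> {l<..}"
    using tau_facts(1)[OF assms(3)] assms(4) by (auto intro: less_le_trans)
  then show ?thesis using continuous_on_compose2[OF c1 c2] by blast
qed

lemma lam1_cont:
  assumes "0 < \<beta>" "\<beta> < 1"
  shows "continuous_on UNIV (\<lambda>p::real. lam1 \<beta> b (sqrt (k^2 + p^2)))"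
proof -
  have p: "\<And>x. 1 + \<beta> * tanh x \<noteq> 0" using onepbT_pos[OF assms(1,2)] by (metis less_irrefl)
  show ?thesis unfolding lam1_def by (intro continuous_intros) (auto simp: p)
qed


definition Kf :: "real \<Rightarrow> real \<Rightarrow> real \<Rightarrow> real \<Rightarrow> real \<Rightarrow> real \<Rightarrow> real \<Rightarrow> (complex \<Rightarrow> complex) \<Rightarrow> real \<Rightarrow> complex" where
  "Kf \<beta> b a k \<sigma> y x A p = complex_of_real (gfun \<beta> b a (lam1 \<beta> b k * (1 - \<sigma>^2)) y (sqrt (k^2 + p^2))
        / (lam1 \<beta> b (sqrt (k^2 + p^2)) - lam1 \<beta> b k * (1 - \<sigma>^2))) * (exp (\<i> * of_real p * of_real x) * A (of_real p))"

lemma core: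
  fixes \<beta> b a k \<delta> xm :: real
  assumes bas: "0 < \<beta>" "\<beta> < 1" "0 < b" "0 < k" "0 < a" and d: "0 < \<delta>" and xm: "0 \<le> xm"
  shows "\<exists>C. \<forall>\<sigma> y x A M. 0 < \<sigma> \<and> \<sigma> < 1/2 \<and> \<bar>y\<bar> \<le> a/2 \<and> \<bar>x\<bar> \<le> xm \<and> A holomorphic_on strip \<delta>
             \<and> (\<forall>z\<in>strip \<delta>. cmod (A z) \<le> M) \<longrightarrow>
     integrable lborel (Kf \<beta> b a k \<sigma> y x A)
     \<and> (\<forall>p. cmod (Kf \<beta> b a k \<sigma> y x A p) \<le> Cgb a k (lam1 \<beta> b k) * exp (xm * \<delta>) / (lam1 \<beta> b k * \<sigma>^2) * M / (1 + p^2))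
     \<and> cmod ((LINT p|lborel. Kf \<beta> b a k \<sigma> y x A p)
          - complex_of_real (gfun \<beta> b a (lam1 \<beta> b k) y k * pi * q1 \<beta> b k / (lam1 \<beta> b k * \<sigma>)) * A 0) \<le> C * M"
proof -
  define \<Lambda> where "\<Lambda> = lam1 \<beta> b k"
  have \<Lambda>: "0 < \<Lambda>" "\<Lambda> < k" using Lam_props[OF bas(1-4)] by (auto simp: \<Lambda>_def)
  define d1k where "d1k = d1 \<beta> b k"
  have d1k: "0 < d1k" using Lam_props[OF bas(1-4)] by (auto simp: d1k_def)
  have der: "deriv (lam1 \<beta> b) k = d1k" unfolding d1k_def by (rule DERIV_imp_deriv[OF lam1_deriv[OF bas(1,2)]])
  define q where "q = q1 \<beta> b k"
  have qdef: "q = sqrt (2 * k * \<Lambda> / d1k)" by (simp add: q_def q1_def Lam1_def \<Lambda>_def der)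
  have q: "0 < q" "q^2 = 2 * k * \<Lambda> / d1k" using \<Lambda> d1k bas by (auto simp: qdef)
  define dq where "dq = d1k / (2 * k)"
  have dq: "0 < dq" "dq = \<Lambda> / q^2" using d1k bas \<Lambda> q by (auto simp: dq_def field_simps)
  obtain B2 where B2: "\<And>s. s\<in>{k..k+1} \<Longrightarrow> \<bar>lam1 \<beta> b s - \<Lambda> - d1k * (s - k)\<bar> \<le> B2 * (s - k)^2"
    using lam1_second[OF bas(1,2,4), of b] unfolding \<Lambda>_def d1k_def by blast
  obtain Ls0 where Ls0: "\<And>l y s. l\<in>{0..\<Lambda>} \<Longrightarrow> y\<in>{-a/2..a/2} \<Longrightarrow> s\<in>{k..k+1} \<Longrightarrow>
        \<bar>gfun \<beta> b a l y s - gfun \<beta> b a l y k\<bar> \<le> Ls0 * (s - k)"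
    using gfun_lip_s[OF bas(1,2) \<Lambda>(2), where a=a and b=b] by blast
  define Ls where "Ls = \<bar>Ls0\<bar>"
  have Ls: "\<And>l y s. l\<in>{0..\<Lambda>} \<Longrightarrow> y\<in>{-a/2..a/2} \<Longrightarrow> s\<in>{k..k+1} \<Longrightarrow>
        \<bar>gfun \<beta> b a l y s - gfun \<beta> b a l y k\<bar> \<le> Ls * (s - k)" "0 \<le> Ls"
  proof -
    fix l y s assume h: "l\<in>{0..\<Lambda>}" "y\<in>{-a/2..a/2}" "s\<in>{k..k+1}"
    have "Ls0 * (s - k) \<le> Ls * (s - k)" unfolding Ls_def using h(3) by (intro mult_right_mono) auto
    then show "\<bar>gfun \<beta> b a l y s - gfun \<beta> b a l y k\<bar> \<le> Ls * (s - k)" using Ls0[OF h] by linarith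
  qed (simp add: Ls_def)
  obtain Ll0 where Ll0: "\<And>y l l'. y\<in>{-a/2..a/2} \<Longrightarrow> l\<in>{0..\<Lambda>} \<Longrightarrow> l'\<in>{0..\<Lambda>} \<Longrightarrow>
        \<bar>gfun \<beta> b a l y k - gfun \<beta> b a l' y k\<bar> \<le> Ll0 * \<bar>l - l'\<bar>"
    using gfun_lip_l[OF bas(1,2) \<Lambda>(2), where a=a and b=b] by blast
  define Ll where "Ll = \<bar>Ll0\<bar>"
  have Ll: "\<And>y l l'. y\<in>{-a/2..a/2} \<Longrightarrow> l\<in>{0..\<Lambda>} \<Longrightarrow> l'\<in>{0..\<Lambda>} \<Longrightarrow>
        \<bar>gfun \<beta> b a l y k - gfun \<beta> b a l' y k\<bar> \<le> Ll * \<bar>l - l'\<bar>" "0 \<le> Ll"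
  proof -
    fix y l l' assume h: "y\<in>{-a/2..a/2}" "l\<in>{0..\<Lambda>}" "l'\<in>{0..\<Lambda>}"
    have "Ll0 * \<bar>l - l'\<bar> \<le> Ll * \<bar>l - l'\<bar>" unfolding Ll_def by (intro mult_right_mono) auto
    then show "\<bar>gfun \<beta> b a l y k - gfun \<beta> b a l' y k\<bar> \<le> Ll * \<bar>l - l'\<bar>" using Ll0[OF h] by linarith
  qed (simp add: Ll_def)
  define Cg where "Cg = Cgb a k \<Lambda>"
  have Cg: "0 \<le> Cg" using \<Lambda> bas by (simp add: Cg_def Cgb_def)
  define Xb where "Xb = exp (xm * \<delta>)"
  have Xb: "0 < Xb" by (simp add: Xb_def)
  define m where "m = \<Lambda> / (k * (2 * k + 1))"
  have m: "0 < m" using \<Lambda> bas by (simp add: m_def)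
  define e1 where "e1 = (\<Lambda> / k) * (sqrt (k^2 + 1) - k)"
  have e1: "0 < e1"
  proof -
    have "sqrt (k^2) < sqrt (k^2 + 1)" by (rule real_sqrt_less_mono) simp
    then have "k < sqrt (k^2 + 1)" using bas by simp
    then show ?thesis using \<Lambda> bas by (simp add: e1_def)
  qed
  define Cq where "Cq = (d1k / (2 * k) + \<bar>B2\<bar>) / (4 * k^2)"
  have Cq: "0 \<le> Cq" using d1k bas by (simp add: Cq_def)
  define K1 where "K1 = Cg * (16 * Xb / \<delta>^2) / m + 2 * (Ls / (2 * k) / m + Cg * Cq / (m * dq))"
  have K1: "0 \<le> K1" unfolding K1_def using Cg Xb m dq(1) Ls(2) bas Cq d
    by (intro add_nonneg_nonneg mult_nonneg_nonneg divide_nonneg_pos) auto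
  define Cw where "Cw = K1 + Cg * Xb / e1 + 2 * Cg / dq"
  have Cw: "0 \<le> Cw" unfolding Cw_def using K1 Cg Xb e1 dq(1)
    by (intro add_nonneg_nonneg mult_nonneg_nonneg divide_nonneg_pos) auto
  define C where "C = Cw * pi + pi * q * Ll"
  show ?thesis
  proof (rule exI[of _ C], intro allI impI)
    fix \<sigma> y x :: real and A :: "complex \<Rightarrow> complex" and M :: real
    assume H: "0 < \<sigma> \<and> \<sigma> < 1/2 \<and> \<bar>y\<bar> \<le> a/2 \<and> \<bar>x\<bar> \<le> xm \<and> A holomorphic_on strip \<delta> \<and> (\<forall>z\<in>strip \<delta>. cmod (A z) \<le> M)"
    then have \<sigma>: "0 < \<sigma>" "\<sigma> < 1/2" and y: "\<bar>y\<bar> \<le> a/2" and x: "\<bar>x\<bar> \<le> xm"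
      and hol: "A holomorphic_on strip \<delta>" and Abnd: "\<And>z. z \<in> strip \<delta> \<Longrightarrow> cmod (A z) \<le> M" by auto
    show "integrable lborel (Kf \<beta> b a k \<sigma> y x A)
     \<and> (\<forall>p. cmod (Kf \<beta> b a k \<sigma> y x A p) \<le> Cgb a k (lam1 \<beta> b k) * exp (xm * \<delta>) / (lam1 \<beta> b k * \<sigma>^2) * M / (1 + p^2))
     \<and> cmod ((LINT p|lborel. Kf \<beta> b a k \<sigma> y x A p)
          - complex_of_real (gfun \<beta> b a (lam1 \<beta> b k) y k * pi * q1 \<beta> b k / (lam1 \<beta> b k * \<sigma>)) * A 0) \<le> C * M"
    proof -
    define l where "l = \<Lambda> * (1 - \<sigma>^2)"
    have "\<sigma> * \<sigma> < 1 * 1" by (rule mult_strict_mono) (use \<sigma> in auto)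
    then have s2: "\<sigma>^2 < 1" by (simp add: power2_eq_square)
    have ls1: "0 \<le> \<Lambda> * \<sigma>^2" "\<Lambda> * \<sigma>^2 \<le> \<Lambda>" using \<Lambda> s2 by (auto intro: mult_left_le)
    have le: "l = \<Lambda> - \<Lambda> * \<sigma>^2" by (simp add: l_def algebra_simps)
    have l: "0 \<le> l" "l \<le> \<Lambda>" "\<Lambda> - l = \<Lambda> * \<sigma>^2" "l < k"
      using \<Lambda> ls1 le by linarith+
    have lI: "l \<in> {0..\<Lambda>}" using l by auto
    have yI: "y \<in> {-a/2..a/2}" using y by auto
    have lL: "lam1 \<beta> b k * (1 - \<sigma>^2) = l" by (simp add: l_def \<Lambda>_def)
    define \<tau> where "\<tau> p = sqrt (k^2 + p^2)" for p :: real
    define G where "G p = gfun \<beta> b a l y (\<tau> p)" for p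
    define G0 where "G0 = gfun \<beta> b a l y k"
    define E where "E p = lam1 \<beta> b (\<tau> p) - l" for p
    define B where "B z = exp (\<i> * z * of_real x) * A z" for z
    define Qf where "Qf p = \<Lambda> * \<sigma>^2 + dq * p^2" for p :: real
    have \<tau>k: "\<And>p. k \<le> \<tau> p" unfolding \<tau>_def using tau_facts(1)[OF bas(4)] by blast
    have \<tau>e: "\<And>p. \<tau> (- p) = \<tau> p" by (simp add: \<tau>_def)
    have \<tau>0: "\<tau> 0 = k" using bas by (simp add: \<tau>_def)
    have Elow: "\<And>p. \<Lambda> / k * (\<tau> p - k) + \<Lambda> * \<sigma>^2 \<le> E p"
      using E_lower(1)[OF bas(1-4)] l(3) unfolding E_def \<tau>_def \<Lambda>_def by smt
    have Elow2: "\<And>p. 0 \<le> \<Lambda> / k * (\<tau> p - k)" using \<tau>k \<Lambda> bas by simp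
    have Epos: "\<And>p. \<Lambda> * \<sigma>^2 \<le> E p" "\<And>p. 0 < E p"
    proof -
      fix p
      show "\<Lambda> * \<sigma>^2 \<le> E p" using Elow[of p] Elow2[of p] by linarith
      moreover have "0 < \<Lambda> * \<sigma>^2" using \<Lambda> \<sigma> by simp
      ultimately show "0 < E p" by linarith
    qed
    have M0: "0 \<le> M" using Abnd[of 0] d by (simp add: strip_def) (meson norm_ge_zero order_trans)
    have Bhol: "B holomorphic_on strip \<delta>" unfolding B_def[abs_def] by (intro holomorphic_intros hol)
    have Bbnd: "\<And>z. z \<in> strip \<delta> \<Longrightarrow> cmod (B z) \<le> Xb * M"
    proof -
      fix z assume z: "z \<in> strip \<delta>"
      have "Re (\<i> * z * of_real x) = - (Im z * x)" by simp
      also have "\<dots> \<le> \<bar>Im z\<bar> * \<bar>x\<bar>" by (metis abs_mult abs_ge_minus_self)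
      also have "\<dots> \<le> \<delta> * xm" using z x by (intro mult_mono) (auto simp: strip_def)
      finally have "cmod (exp (\<i> * z * of_real x)) \<le> Xb" by (simp add: Xb_def mult.commute)
      then show "cmod (B z) \<le> Xb * M" unfolding B_def norm_mult using Abnd[OF z]
        using Xb by (intro mult_mono) auto
    qed
    have B0: "B 0 = A 0" by (simp add: B_def)
    have Gb: "\<And>p. \<bar>G p\<bar> \<le> Cg / (1 + p^2)"
      unfolding G_def \<tau>_def Cg_def using g_bound[OF bas(1,2,3,5,4) l(1) l(2) \<Lambda>(2)] y by simp
    have G0b: "\<bar>G0\<bar> \<le> Cg" using Gb[of 0] \<tau>0 by (simp add: G_def G0_def)
    have Kf_eq: "\<And>p. Kf \<beta> b a k \<sigma> y x A p = complex_of_real (G p / E p) * B (of_real p)"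
      by (simp add: Kf_def G_def E_def B_def \<tau>_def lL)
    have dom: "\<And>p. cmod (Kf \<beta> b a k \<sigma> y x A p) \<le> Cg * Xb / (\<Lambda> * \<sigma>^2) * M / (1 + p^2)"
    proof -
      fix p :: real
      have "\<bar>G p / E p\<bar> \<le> (Cg / (1 + p^2)) / (\<Lambda> * \<sigma>^2)"
      proof -
        have "\<bar>G p\<bar> / E p \<le> (Cg / (1 + p^2)) / (\<Lambda> * \<sigma>^2)"
          by (rule frac_le) (use Gb[of p] Epos[of p] Cg \<Lambda> \<sigma> in \<open>auto intro: divide_nonneg_pos add_pos_nonneg\<close>)
        then show ?thesis using Epos[of p] by (simp add: abs_divide)
      qed
      moreover have "cmod (B (of_real p)) \<le> Xb * M" using Bbnd[OF real_in_strip[OF d]] .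
      ultimately have "\<bar>G p / E p\<bar> * cmod (B (of_real p)) \<le> (Cg / (1 + p^2)) / (\<Lambda> * \<sigma>^2) * (Xb * M)"
        by (rule mult_mono) (use Cg \<Lambda> \<sigma> in \<open>auto intro: divide_nonneg_pos add_pos_nonneg\<close>)
      also have "\<dots> = Cg * Xb / (\<Lambda> * \<sigma>^2) * M / (1 + p^2)" by (simp add: field_simps)
      finally show "cmod (Kf \<beta> b a k \<sigma> y x A p) \<le> Cg * Xb / (\<Lambda> * \<sigma>^2) * M / (1 + p^2)"
        unfolding Kf_eq norm_mult norm_of_real .
    qed
    have Acont: "continuous_on UNIV (\<lambda>p::real. A (of_real p))"
    proof (rule continuous_on_compose2[OF holomorphic_on_imp_continuous_on[OF hol] continuous_on_of_real])
      show "range complex_of_real \<subseteq> strip \<delta>" using real_in_strip[OF d] by auto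
    qed auto
    have Gc: "continuous_on UNIV G" unfolding G_def[abs_def] \<tau>_def using gfun_cont[OF bas(1,2,4) l(4)] by simp
    have Ec: "continuous_on UNIV E" unfolding E_def[abs_def] \<tau>_def
      by (intro continuous_intros lam1_cont[OF bas(1,2)])
    have Enz: "\<And>p. E p \<noteq> 0" using Epos(2) by (metis less_irrefl)
    have Kcont: "continuous_on UNIV (Kf \<beta> b a k \<sigma> y x A)"
    proof -
      have e: "Kf \<beta> b a k \<sigma> y x A = (\<lambda>p. complex_of_real (G p / E p) * (exp (\<i> * of_real p * of_real x) * A (of_real p)))"
        by (rule ext) (simp add: Kf_eq B_def)
      have "continuous_on UNIV (\<lambda>p. complex_of_real (G p / E p) * (exp (\<i> * of_real p * of_real x) * A (of_real p)))"
        by (intro continuous_intros Gc Ec Acont) (use Enz in auto)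
      then show ?thesis unfolding e .
    qed
    define cK where "cK = Cg * Xb / (\<Lambda> * \<sigma>^2) * M"
    have cK: "0 \<le> cK" using Cg Xb \<Lambda> \<sigma> M0 by (simp add: cK_def)
    have fint: "integrable lborel (\<lambda>p. cK * (1 / (1 + p^2)))" by (rule integrable_mult_right[OF cauchy_int(1)])
    have meas: "Kf \<beta> b a k \<sigma> y x A \<in> borel_measurable lborel"
      using borel_measurable_continuous_onI[OF Kcont] by simp
    have ae: "AE p in lborel. norm (Kf \<beta> b a k \<sigma> y x A p) \<le> norm (cK * (1 / (1 + p^2)))"
    proof (rule AE_I2)
      fix p :: real
      have "norm (cK * (1 / (1 + p^2))) = cK / (1 + p^2)" using cK by (simp add: add_pos_nonneg)
      then show "norm (Kf \<beta> b a k \<sigma> y x A p) \<le> norm (cK * (1 / (1 + p^2)))"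
        using dom[of p] by (simp add: cK_def)
    qed
    have Kint: "integrable lborel (Kf \<beta> b a k \<sigma> y x A)" by (rule Bochner_Integration.integrable_bound[OF fint meas ae])
    have sq: "0 < \<sigma> * q" using \<sigma> q by simp
    have LS: "0 < \<Lambda> * \<sigma>^2" using \<Lambda> \<sigma> by simp
    have Qf_alt: "\<And>p. Qf p = (\<Lambda> * \<sigma>^2) * (1 + (p / (\<sigma> * q))^2)"
      using \<sigma> q(1) by (simp add: Qf_def dq(2) field_simps power2_eq_square)
    have Qpos: "\<And>p. 0 < Qf p" using LS by (simp add: Qf_alt add_pos_nonneg)
    have Qe: "\<And>p. Qf (- p) = Qf p" by (simp add: Qf_def)
    have lor: "integrable lborel (\<lambda>p. 1 / Qf p)" "(LINT p|lborel. 1 / Qf p) = pi * (\<sigma> * q) / (\<Lambda> * \<sigma>^2)"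
      unfolding Qf_alt using int_lorentz[OF LS sq] by auto
    define Mn where "Mn p = complex_of_real (G0 * (1 / Qf p)) * A 0" for p
    have Mn_int: "integrable lborel Mn"
      unfolding Mn_def[abs_def] by (intro integrable_mult_left integrable_of_real integrable_mult_right lor(1))
    have Mn_val: "(LINT p|lborel. Mn p) = complex_of_real (G0 * (pi * (\<sigma> * q) / (\<Lambda> * \<sigma>^2))) * A 0"
    proof -
      have "(LINT p|lborel. Mn p) = (LINT p|lborel. complex_of_real (G0 * (1 / Qf p))) * A 0"
        unfolding Mn_def by (rule integral_mult_left_zero)
      also have "(LINT p|lborel. complex_of_real (G0 * (1 / Qf p))) = complex_of_real (LINT p|lborel. G0 * (1 / Qf p))"
        by (rule integral_of_real) (rule integrable_mult_right[OF lor(1)])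
      also have "(LINT p|lborel. G0 * (1 / Qf p)) = G0 * (pi * (\<sigma> * q) / (\<Lambda> * \<sigma>^2))"
        by (simp only: integral_mult_right_zero lor(2))
      finally show ?thesis .
    qed
    define R where "R p = Kf \<beta> b a k \<sigma> y x A p - Mn p" for p
    have Rint: "integrable lborel R" unfolding R_def[abs_def] using Kint Mn_int by simp
    have Rint': "integrable lborel (\<lambda>p. R (- p))" using Rint int_reflect(2)[of R] by simp
    define S where "S p = (R p + R (- p)) / 2" for p
    have Sint: "integrable lborel S" unfolding S_def[abs_def] using Rint Rint' by simp
    have SR: "(LINT p|lborel. S p) = (LINT p|lborel. R p)"
    proof -
      have "(LINT p|lborel. S p) = ((LINT p|lborel. R p) + (LINT p|lborel. R (- p))) / 2"
        unfolding S_def using Rint Rint' by simp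
      also have "\<dots> = (LINT p|lborel. R p)" using int_reflect(1)[of R] by simp
      finally show ?thesis .
    qed
    have KMR: "(LINT p|lborel. Kf \<beta> b a k \<sigma> y x A p) = (LINT p|lborel. Mn p) + (LINT p|lborel. R p)"
    proof -
      have "(LINT p|lborel. R p) = (LINT p|lborel. Kf \<beta> b a k \<sigma> y x A p) - (LINT p|lborel. Mn p)"
        unfolding R_def using Kint Mn_int by simp
      then show ?thesis by simp
    qed
    have A0b: "cmod (A 0) \<le> M" using Abnd[of 0] d by (simp add: strip_def)
    have Sb: "cmod (S p) \<le> Cw * M / (1 + p^2)" for p
    proof -
      have Ge: "G (- p) = G p" by (simp add: G_def \<tau>e)
      have Ee: "E (- p) = E p" by (simp add: E_def \<tau>e)
      have RR: "R p + R (- p) = complex_of_real (G p / E p) * (B (of_real p) + B (- of_real p)) - 2 * A 0 * complex_of_real (G0 / Qf p)"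
        unfolding R_def Kf_eq Mn_def Ge Ee Qe by (simp add: algebra_simps)
      have P1: "1 \<le> 1 + p^2" by simp
      have P0: "0 < 1 + p^2" by (simp add: add_pos_nonneg)
      have Rb: "cmod (R p + R (- p)) \<le> 2 * (Cw * M / (1 + p^2))"
      proof (cases "p^2 \<le> 1")
        case True
        have \<tau>1: "\<tau> p \<le> k + 1" using tau_facts(5)[OF bas(4) True] by (simp add: \<tau>_def)
        have u1: "p^2 / (2 * k + 1) \<le> \<tau> p - k" using tau_facts(6)[OF bas(4) True] by (simp add: \<tau>_def)
        have u2: "\<tau> p - k \<le> p^2 / (2 * k)" using tau_facts(4)[OF bas(4)] by (simp add: \<tau>_def)
        have u0: "0 \<le> \<tau> p - k" using \<tau>k[of p] by simp
        have En: "m * p^2 \<le> E p"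
        proof -
          have "m * p^2 = \<Lambda> / k * (p^2 / (2 * k + 1))" using bas by (simp add: m_def field_simps)
          also have "\<dots> \<le> \<Lambda> / k * (\<tau> p - k)" using u1 \<Lambda> bas by (intro mult_left_mono) auto
          finally show ?thesis using Elow[of p] ls1 by linarith
        qed
        have Qn: "dq * p^2 \<le> Qf p" using ls1 by (simp add: Qf_def)
        have Gn: "\<bar>G p\<bar> \<le> Cg"
        proof -
          have "Cg / (1 + p^2) \<le> Cg / 1" using Cg P1 P0 by (intro divide_left_mono) auto
          then show ?thesis using Gb[of p] by simp
        qed
        have Gd: "\<bar>G p - G0\<bar> \<le> Ls / (2 * k) * p^2"
        proof -
          have "\<bar>G p - G0\<bar> \<le> Ls * (\<tau> p - k)" unfolding G_def G0_def
            using Ls(1)[OF lI yI] \<tau>k[of p] \<tau>1 by auto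
          also have "\<dots> \<le> Ls * (p^2 / (2 * k))" using u2 Ls(2) by (intro mult_left_mono) auto
          finally show ?thesis by simp
        qed
        have Lg: "0 \<le> Ls / (2 * k)" using Ls(2) bas by simp
        have QE: "\<bar>Qf p - E p\<bar> \<le> Cq * p^2 * p^2"
        proof -
          define u where "u = \<tau> p - k"
          have pu: "p^2 = u * (u + 2 * k)" using tau_facts(3)[OF bas(4), of p] by (simp add: u_def \<tau>_def add.commute)
          define r where "r = lam1 \<beta> b (\<tau> p) - \<Lambda> - d1k * u"
          have rb: "\<bar>r\<bar> \<le> \<bar>B2\<bar> * u^2"
          proof -
            have "\<bar>r\<bar> \<le> B2 * u^2" unfolding r_def u_def using B2[of "\<tau> p"] \<tau>k[of p] \<tau>1 by auto
            also have "\<dots> \<le> \<bar>B2\<bar> * u^2" by (intro mult_right_mono) auto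
            finally show ?thesis .
          qed
          have dqk: "dq * (2 * k) = d1k" using bas by (simp add: dq_def)
          have "Qf p - E p = dq * p^2 - (lam1 \<beta> b (\<tau> p) - \<Lambda>)" using l(3) by (simp add: Qf_def E_def)
          also have "\<dots> = dq * u^2 + dq * (2 * k) * u - d1k * u - r" unfolding pu r_def by (simp add: algebra_simps power2_eq_square)
          also have "\<dots> = d1k / (2 * k) * u^2 - r" using dqk by (simp add: dq_def)
          finally have QEe: "Qf p - E p = d1k / (2 * k) * u^2 - r" .
          have "\<bar>Qf p - E p\<bar> \<le> d1k / (2 * k) * u^2 + \<bar>B2\<bar> * u^2"
          proof -
            have X0: "0 \<le> d1k / (2 * k) * u^2" using d1k bas by simp
            have "\<bar>d1k / (2 * k) * u^2 - r\<bar> \<le> \<bar>d1k / (2 * k) * u^2\<bar> + \<bar>r\<bar>" by (rule abs_triangle_ineq4)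
            then show ?thesis unfolding QEe using X0 rb by linarith
          qed
          also have "\<dots> = (d1k / (2 * k) + \<bar>B2\<bar>) * u^2" by (simp add: algebra_simps)
          also have "\<dots> \<le> (d1k / (2 * k) + \<bar>B2\<bar>) * (p^2 / (2 * k))^2"
          proof (rule mult_left_mono)
            show "u^2 \<le> (p^2 / (2 * k))^2" using u0 u2 by (simp add: u_def power_mono)
            show "0 \<le> d1k / (2 * k) + \<bar>B2\<bar>" using d1k bas by simp
          qed
          also have "\<dots> = Cq * p^2 * p^2" by (simp add: Cq_def power2_eq_square field_simps)
          finally show ?thesis .
        qed
        have F: "cmod (B (of_real p) + B (- of_real p) - 2 * A 0) \<le> 16 * (Xb * M) / \<delta>^2 * p^2"
          using sym2[OF Bhol Bbnd d, of p] B0 by simp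
        have KF: "0 \<le> 16 * (Xb * M) / \<delta>^2" using Xb M0 by simp
        have "cmod (R p + R (- p)) \<le> Cg * (16 * (Xb * M) / \<delta>^2) / m + 2 * M * (Ls / (2 * k) / m + Cg * Cq / (m * dq))"
          unfolding RR by (rule key_near[OF Epos(2) En m Qpos Qn dq(1) Gn G0b Gd Lg QE Cq F KF A0b])
        also have "\<dots> = M * K1" by (simp add: K1_def algebra_simps)
        also have "\<dots> \<le> M * Cw" using M0 Cg Xb e1 dq(1) by (intro mult_left_mono) (auto simp: Cw_def)
        also have "\<dots> \<le> 2 * (Cw * M / (1 + p^2))"
        proof -
          have "(1 + p^2) * (M * Cw) \<le> 2 * (M * Cw)" using True M0 Cw by (intro mult_right_mono) auto
          then show ?thesis by (simp add: field_simps add_pos_nonneg)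
        qed
        finally show ?thesis .
      next
        case False
        then have p1: "1 \<le> p^2" by simp
        have Ef: "e1 \<le> E p"
        proof -
          have "sqrt (k^2 + 1) \<le> \<tau> p" using tau_facts(7)[OF bas(4) p1] by (simp add: \<tau>_def)
          then have "e1 \<le> \<Lambda> / k * (\<tau> p - k)" unfolding e1_def using \<Lambda> bas by (intro mult_left_mono) auto
          then show ?thesis using Elow[of p] ls1 by linarith
        qed
        have dqh: "0 < dq / 2" using dq by simp
        have Qf': "dq / 2 * (1 + p^2) \<le> Qf p"
        proof -
          have "dq / 2 * (1 + p^2) \<le> dq * p^2" using p1 dq(1) by (simp add: field_simps)
          then show ?thesis using ls1 by (simp add: Qf_def)
        qed
        have Bp: "cmod (B (of_real p)) \<le> Xb * M" "cmod (B (- of_real p)) \<le> Xb * M"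
          using Bbnd real_in_strip[OF d, of p] real_in_strip[OF d, of "- p"] by auto
        have "cmod (R p + R (- p)) \<le> (2 * Cg * (Xb * M) / e1 + 2 * M * Cg / (dq / 2)) / (1 + p^2)"
          unfolding RR by (rule key_far[OF e1 Ef dqh Qf' Gb G0b Bp A0b])
        also have "\<dots> \<le> 2 * (Cw * M / (1 + p^2))"
        proof -
          have "2 * Cg * (Xb * M) / e1 + 2 * M * Cg / (dq / 2) = 2 * (M * (Cg * Xb / e1 + 2 * Cg / dq))"
            by (simp add: field_simps)
          also have "\<dots> \<le> 2 * (M * Cw)" using M0 K1 by (intro mult_left_mono) (auto simp: Cw_def)
          finally have "2 * Cg * (Xb * M) / e1 + 2 * M * Cg / (dq / 2) \<le> 2 * (M * Cw)" .
          then have "(2 * Cg * (Xb * M) / e1 + 2 * M * Cg / (dq / 2)) / (1 + p^2) \<le> 2 * (M * Cw) / (1 + p^2)"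
            using P0 by (intro divide_right_mono) auto
          also have "\<dots> = 2 * (Cw * M / (1 + p^2))" by (simp add: mult.commute)
          finally show ?thesis .
        qed
        finally show ?thesis .
      qed
      then show ?thesis unfolding S_def by (simp add: norm_divide mult.commute)
    qed
    have Sbint: "cmod (LINT p|lborel. S p) \<le> Cw * M * pi"
    proof -
      have gi: "integrable lborel (\<lambda>p. Cw * M * (1 / (1 + p^2)))" by (rule integrable_mult_right[OF cauchy_int(1)])
      have "cmod (LINT p|lborel. S p) \<le> (LINT p|lborel. Cw * M * (1 / (1 + p^2)))"
        by (rule Bochner_Integration.integral_norm_bound_integral[OF Sint gi]) (use Sb in simp)
      also have "\<dots> = Cw * M * pi" by (simp only: integral_mult_right_zero cauchy_int(2))
      finally show ?thesis .
    qed
    define c0 where "c0 = pi * (\<sigma> * q) / (\<Lambda> * \<sigma>^2)"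
    have c0: "0 < c0" "c0 = pi * q / (\<Lambda> * \<sigma>)" using \<sigma> q \<Lambda> by (auto simp: c0_def power2_eq_square)
    have tgt: "gfun \<beta> b a (lam1 \<beta> b k) y k * pi * q1 \<beta> b k / (lam1 \<beta> b k * \<sigma>) = gfun \<beta> b a \<Lambda> y k * c0"
      unfolding \<Lambda>_def[symmetric] q_def[symmetric] c0(2) by simp
    have Gdiff: "\<bar>G0 - gfun \<beta> b a \<Lambda> y k\<bar> \<le> Ll * (\<Lambda> * \<sigma>^2)"
    proof -
      have "\<Lambda> \<in> {0..\<Lambda>}" using \<Lambda> by simp
      then have "\<bar>G0 - gfun \<beta> b a \<Lambda> y k\<bar> \<le> Ll * \<bar>l - \<Lambda>\<bar>" unfolding G0_def by (rule Ll(1)[OF yI lI])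
      also have "\<bar>l - \<Lambda>\<bar> = \<Lambda> * \<sigma>^2" using l(3) ls1 by linarith
      finally show ?thesis .
    qed
    have MD: "cmod ((LINT p|lborel. Mn p) - complex_of_real (gfun \<beta> b a \<Lambda> y k * c0) * A 0) \<le> pi * q * Ll * M"
    proof -
      have eqM: "(LINT p|lborel. Mn p) - complex_of_real (gfun \<beta> b a \<Lambda> y k * c0) * A 0
          = complex_of_real ((G0 - gfun \<beta> b a \<Lambda> y k) * c0) * A 0"
      proof -
        have "(LINT p|lborel. Mn p) = complex_of_real (G0 * c0) * A 0" unfolding Mn_val c0_def ..
        then show ?thesis by (simp add: algebra_simps)
      qed
      have ab: "\<bar>(G0 - gfun \<beta> b a \<Lambda> y k) * c0\<bar> = \<bar>G0 - gfun \<beta> b a \<Lambda> y k\<bar> * c0"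
        using c0(1) by (simp add: abs_mult)
      have nM: "cmod (complex_of_real ((G0 - gfun \<beta> b a \<Lambda> y k) * c0) * A 0) = \<bar>G0 - gfun \<beta> b a \<Lambda> y k\<bar> * c0 * cmod (A 0)"
        by (simp only: norm_mult norm_of_real ab)
      have "\<bar>G0 - gfun \<beta> b a \<Lambda> y k\<bar> * c0 * cmod (A 0) \<le> (Ll * (\<Lambda> * \<sigma>^2)) * c0 * M"
      proof (rule mult_mono[OF mult_right_mono[OF Gdiff] A0b])
        show "0 \<le> c0" using c0(1) by simp
        show "0 \<le> Ll * (\<Lambda> * \<sigma>^2) * c0" using Ll(2) ls1 c0(1) by simp
      qed simp
      also have "(Ll * (\<Lambda> * \<sigma>^2)) * c0 * M = pi * q * Ll * M * \<sigma>"
        using \<Lambda> \<sigma> unfolding c0(2) by (simp add: field_simps power2_eq_square)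
      also have "\<dots> \<le> pi * q * Ll * M * 1"
        using \<sigma> q Ll(2) M0 by (intro mult_left_mono) auto
      finally show ?thesis unfolding eqM nM by simp
    qed
    have final: "cmod ((LINT p|lborel. Kf \<beta> b a k \<sigma> y x A p)
          - complex_of_real (gfun \<beta> b a (lam1 \<beta> b k) y k * pi * q1 \<beta> b k / (lam1 \<beta> b k * \<sigma>)) * A 0) \<le> C * M"
    proof -
      have "(LINT p|lborel. Kf \<beta> b a k \<sigma> y x A p)
          - complex_of_real (gfun \<beta> b a (lam1 \<beta> b k) y k * pi * q1 \<beta> b k / (lam1 \<beta> b k * \<sigma>)) * A 0
          = ((LINT p|lborel. Mn p) - complex_of_real (gfun \<beta> b a \<Lambda> y k * c0) * A 0) + (LINT p|lborel. S p)"
        unfolding KMR SR tgt by simp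
      then have "cmod ((LINT p|lborel. Kf \<beta> b a k \<sigma> y x A p)
          - complex_of_real (gfun \<beta> b a (lam1 \<beta> b k) y k * pi * q1 \<beta> b k / (lam1 \<beta> b k * \<sigma>)) * A 0)
          \<le> cmod ((LINT p|lborel. Mn p) - complex_of_real (gfun \<beta> b a \<Lambda> y k * c0) * A 0) + cmod (LINT p|lborel. S p)"
        by (metis norm_triangle_ineq)
      also have "\<dots> \<le> pi * q * Ll * M + Cw * M * pi" using MD Sbint by linarith
      also have "\<dots> = C * M" by (simp add: C_def algebra_simps)
      finally show ?thesis .
    qed
    show ?thesis using Kint dom final by (simp add: Cg_def Xb_def \<Lambda>_def)
    qed
  qed
qed


lemma smooth_cont: "smooth_real X \<Longrightarrow> continuous_on UNIV X"
proof -
  assume "smooth_real X"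
  then have "\<And>x. X differentiable (at x)" unfolding smooth_real_def by (metis funpow_0)
  then have "\<And>x. isCont X x" by (simp add: differentiable_imp_continuous_within)
  then show ?thesis by (simp add: continuous_at_imp_continuous_on)
qed

lemma cont_bound: "continuous_on UNIV (X::real \<Rightarrow> real) \<Longrightarrow> \<exists>B\<ge>0. \<forall>t\<in>{-pi..pi}. \<bar>X t\<bar> \<le> B"
proof -
  assume c: "continuous_on UNIV X"
  have "compact (X ` {-pi..pi})" by (rule compact_continuous_image[OF continuous_on_subset[OF c]]) auto
  then have "bounded (X ` {-pi..pi})" by (rule compact_imp_bounded)
  then obtain B where B: "\<forall>x\<in>X ` {-pi..pi}. norm x \<le> B" unfolding bounded_iff by blast
  then have "\<forall>t\<in>{-pi..pi}. \<bar>X t\<bar> \<le> B" by auto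
  moreover have "0 \<le> B" using B[rule_format, of "X 0"] by (auto intro: order_trans)
  ultimately show ?thesis by blast
qed

lemma alg2: fixes P e D1 D2 :: real and u v :: complex
  shows "complex_of_real (1 / (2 * pi) * P * e) * u * v / complex_of_real (D1 * D2) = complex_of_real (P * e / (2 * pi * D2) / D1) * (u * v)"
proof (cases "D1 = 0 \<or> D2 = 0")
  case True then show ?thesis by auto
next
  case False then show ?thesis by (simp add: field_simps)
qed

lemma Kint_Kf:
  "Kint \<beta> b k a \<epsilon> X Y (Lam1 \<beta> b k * (1 - \<sigma>^2)) A t p = Kf \<beta> b a k \<sigma> (\<epsilon> * Y t) (\<epsilon> * X t) A p"
proof -
  have ex: "exp (\<i> * complex_of_real (p * \<epsilon> * X t)) = exp (\<i> * complex_of_real p * complex_of_real (\<epsilon> * X t))"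
    by (simp add: mult.assoc)
  show ?thesis unfolding Kint_def L1_def Kf_def gfun_def Lam1_def Let_def ex by (rule alg2)
qed

lemma Kf_t_cont:
  assumes "continuous_on UNIV X" "continuous_on UNIV Y"
  shows "continuous_on UNIV (\<lambda>t. Kf \<beta> b a k \<sigma> (\<epsilon> * Y t) (\<epsilon> * X t) A p)"
proof -
  define s where "s = sqrt (k^2 + p^2)"
  define l where "l = lam1 \<beta> b k * (1 - \<sigma>^2)"
  define K0 where "K0 = P0 \<beta> b s l / (2 * pi * (s - l)) / (lam1 \<beta> b s - l)"
  have e: "(\<lambda>t. Kf \<beta> b a k \<sigma> (\<epsilon> * Y t) (\<epsilon> * X t) A p)
     = (\<lambda>t. complex_of_real (K0 * exp (- (a - \<epsilon> * Y t) * s)) * (exp (\<i> * of_real p * of_real (\<epsilon> * X t)) * A (of_real p)))"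
    by (rule ext) (simp only: Kf_def gfun_def K0_def s_def[symmetric] l_def[symmetric] times_divide_eq_left)
  show ?thesis unfolding e by (intro continuous_intros assms)
qed


lemma R0_eq:
  assumes bas: "0 < \<beta>" "\<beta> < 1" "0 < b" "0 < k" and s: "0 < \<sigma>"
  shows "complex_of_real (1 / \<sigma>) * A 0 * complex_of_real (R0 \<beta> b k a \<epsilon> Y t)
       = complex_of_real (gfun \<beta> b a (lam1 \<beta> b k) (\<epsilon> * Y t) k * pi * q1 \<beta> b k / (lam1 \<beta> b k * \<sigma>)) * A 0"
proof -
  define \<Lambda> where "\<Lambda> = lam1 \<beta> b k"
  have \<Lambda>: "0 < \<Lambda>" "\<Lambda> < k" using Lam_props[OF bas] by (auto simp: \<Lambda>_def)
  define d where "d = d1 \<beta> b k"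
  have d: "0 < d" using Lam_props[OF bas] by (auto simp: d_def)
  have der: "deriv (lam1 \<beta> b) k = d" unfolding d_def by (rule DERIV_imp_deriv[OF lam1_deriv[OF bas(1,2)]])
  define q where "q = q1 \<beta> b k"
  have qdef: "q = sqrt (2 * k * \<Lambda> / d)" by (simp add: q_def q1_def Lam1_def \<Lambda>_def der)
  have q: "0 < q" "q^2 = 2 * k * \<Lambda> / d" using \<Lambda> d bas by (auto simp: qdef)
  have kq: "k / (q * d) = q / (2 * \<Lambda>)"
    using q \<Lambda> d bas by (simp add: field_simps power2_eq_square)
  define P where "P = P0 \<beta> b k \<Lambda>"
  have ee: "exp (- (a - \<epsilon> * Y t) * k) = exp (- k * a) * exp (\<epsilon> * k * Y t)"
    by (simp add: exp_add[symmetric] algebra_simps)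
  have "1 / \<sigma> * R0 \<beta> b k a \<epsilon> Y t = 1 / \<sigma> * (exp (- k * a) * P * (1 / (k - \<Lambda>)) * (k / (q * d)) * exp (\<epsilon> * k * Y t))"
    by (simp add: R0_def Dconst_def P_def Lam1_def \<Lambda>_def q_def der)
  also have "\<dots> = gfun \<beta> b a \<Lambda> (\<epsilon> * Y t) k * pi * q / (\<Lambda> * \<sigma>)"
    unfolding kq gfun_def ee P_def[symmetric] using \<Lambda> s by (simp add: field_simps)
  finally have r: "1 / \<sigma> * R0 \<beta> b k a \<epsilon> Y t = gfun \<beta> b a \<Lambda> (\<epsilon> * Y t) k * pi * q / (\<Lambda> * \<sigma>)" .
  have "complex_of_real (1 / \<sigma>) * A 0 * complex_of_real (R0 \<beta> b k a \<epsilon> Y t) = complex_of_real (1 / \<sigma> * R0 \<beta> b k a \<epsilon> Y t) * A 0"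
    by (simp add: mult_ac)
  then show ?thesis unfolding r by (simp add: \<Lambda>_def q_def)
qed

theorem lemma4p1:
  fixes k a b \<beta> :: real and X Y :: "real \<Rightarrow> real"
  assumes "k > 0" "a > 0" "b > 0" "0 < \<beta>" "\<beta> < 1"
    and "smooth_real X" "smooth_real Y"
    and "\<And>t. X (t + 2 * pi) = X t" "\<And>t. Y (t + 2 * pi) = Y t"
  shows "\<exists>\<epsilon>0>0. \<forall>\<epsilon>. 0 < \<epsilon> \<and> \<epsilon> < \<epsilon>0 \<longrightarrow>
          (\<exists>\<delta>0>0. \<forall>\<delta>. 0 < \<delta> \<and> \<delta> \<le> \<delta>0 \<longrightarrow>
            (\<exists>\<sigma>0>0. \<exists>C. \<forall>\<sigma> A. 0 < \<sigma> \<and> \<sigma> < \<sigma>0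
                 \<and> A holomorphic_on strip \<delta> \<and> bounded (A ` strip \<delta>) \<longrightarrow>
               (\<forall>t\<in>{-pi..pi}. integrable lborel
                   (Kint \<beta> b k a \<epsilon> X Y (Lam1 \<beta> b k * (1 - \<sigma>^2)) A t))
               \<and> continuous_on {-pi..pi} (T0hat \<beta> b k a \<epsilon> X Y \<sigma> A)
               \<and> (\<forall>t\<in>{-pi..pi}. cmod (T0hat \<beta> b k a \<epsilon> X Y \<sigma> A t)
                     \<le> C * (SUP p\<in>strip \<delta>. cmod (A p)))))"
proof -
  have bas: "0 < \<beta>" "\<beta> < 1" "0 < b" "0 < k" "0 < a" using assms by auto
  have Xc: "continuous_on UNIV X" by (rule smooth_cont[OF assms(6)])
  have Yc: "continuous_on UNIV Y" by (rule smooth_cont[OF assms(7)])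
  obtain Xm where Xm: "0 \<le> Xm" "\<And>t. t \<in> {-pi..pi} \<Longrightarrow> \<bar>X t\<bar> \<le> Xm" using cont_bound[OF Xc] by blast
  obtain Ym where Ym: "0 \<le> Ym" "\<And>t. t \<in> {-pi..pi} \<Longrightarrow> \<bar>Y t\<bar> \<le> Ym" using cont_bound[OF Yc] by blast
  define \<epsilon>0 where "\<epsilon>0 = a / (2 * (Ym + 1))"
  have e0: "0 < \<epsilon>0" using bas Ym by (simp add: \<epsilon>0_def)
  show ?thesis
  proof (rule exI[of _ \<epsilon>0], intro conjI allI impI e0)
    fix \<epsilon> :: real assume "0 < \<epsilon> \<and> \<epsilon> < \<epsilon>0"
    then have \<epsilon>: "0 < \<epsilon>" "\<epsilon> < \<epsilon>0" by auto
    have yb: "\<bar>\<epsilon> * Y t\<bar> \<le> a / 2" if t: "t \<in> {-pi..pi}" for t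
    proof -
      have "\<bar>\<epsilon> * Y t\<bar> \<le> \<epsilon> * Ym" using Ym(2)[OF t] \<epsilon> by (simp add: abs_mult mult_left_mono)
      also have "\<dots> \<le> \<epsilon>0 * Ym" using \<epsilon> Ym by (intro mult_right_mono) auto
      also have "\<dots> \<le> a / 2"
      proof -
        have "\<epsilon>0 * Ym = a / 2 * (Ym / (Ym + 1))" using Ym by (simp add: \<epsilon>0_def field_simps)
        also have "\<dots> \<le> a / 2 * 1" using Ym bas by (intro mult_left_mono) auto
        finally show ?thesis by simp
      qed
      finally show ?thesis .
    qed
    have xb: "\<bar>\<epsilon> * X t\<bar> \<le> \<epsilon> * Xm" if t: "t \<in> {-pi..pi}" for t
      using Xm(2)[OF t] \<epsilon> by (simp add: abs_mult mult_left_mono)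
    show "\<exists>\<delta>0>0. \<forall>\<delta>. 0 < \<delta> \<and> \<delta> \<le> \<delta>0 \<longrightarrow>
            (\<exists>\<sigma>0>0. \<exists>C. \<forall>\<sigma> A. 0 < \<sigma> \<and> \<sigma> < \<sigma>0
                 \<and> A holomorphic_on strip \<delta> \<and> bounded (A ` strip \<delta>) \<longrightarrow>
               (\<forall>t\<in>{-pi..pi}. integrable lborel
                   (Kint \<beta> b k a \<epsilon> X Y (Lam1 \<beta> b k * (1 - \<sigma>^2)) A t))
               \<and> continuous_on {-pi..pi} (T0hat \<beta> b k a \<epsilon> X Y \<sigma> A)
               \<and> (\<forall>t\<in>{-pi..pi}. cmod (T0hat \<beta> b k a \<epsilon> X Y \<sigma> A t)
                     \<le> C * (SUP p\<in>strip \<delta>. cmod (A p))))"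
    proof (rule exI[of _ 1], intro conjI allI impI)
      show "(0::real) < 1" by simp
      fix \<delta> :: real assume "0 < \<delta> \<and> \<delta> \<le> 1"
      then have d: "0 < \<delta>" by auto
      have xm: "0 \<le> \<epsilon> * Xm" using \<epsilon> Xm by simp
      obtain C where C: "\<And>\<sigma> y x A M. 0 < \<sigma> \<and> \<sigma> < 1/2 \<and> \<bar>y\<bar> \<le> a/2 \<and> \<bar>x\<bar> \<le> \<epsilon> * Xm \<and> A holomorphic_on strip \<delta>
             \<and> (\<forall>z\<in>strip \<delta>. cmod (A z) \<le> M) \<Longrightarrow>
     integrable lborel (Kf \<beta> b a k \<sigma> y x A)
     \<and> (\<forall>p. cmod (Kf \<beta> b a k \<sigma> y x A p) \<le> Cgb a k (lam1 \<beta> b k) * exp (\<epsilon> * Xm * \<delta>) / (lam1 \<beta> b k * \<sigma>^2) * M / (1 + p^2))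
     \<and> cmod ((LINT p|lborel. Kf \<beta> b a k \<sigma> y x A p)
          - complex_of_real (gfun \<beta> b a (lam1 \<beta> b k) y k * pi * q1 \<beta> b k / (lam1 \<beta> b k * \<sigma>)) * A 0) \<le> C * M"
        using core[OF bas d xm] by blast
      show "\<exists>\<sigma>0>0. \<exists>C. \<forall>\<sigma> A. 0 < \<sigma> \<and> \<sigma> < \<sigma>0
                 \<and> A holomorphic_on strip \<delta> \<and> bounded (A ` strip \<delta>) \<longrightarrow>
               (\<forall>t\<in>{-pi..pi}. integrable lborel
                   (Kint \<beta> b k a \<epsilon> X Y (Lam1 \<beta> b k * (1 - \<sigma>^2)) A t))
               \<and> continuous_on {-pi..pi} (T0hat \<beta> b k a \<epsilon> X Y \<sigma> A)
               \<and> (\<forall>t\<in>{-pi..pi}. cmod (T0hat \<beta> b k a \<epsilon> X Y \<sigma> A t)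
                     \<le> C * (SUP p\<in>strip \<delta>. cmod (A p)))"
      proof (rule exI[of _ "1/2"], rule conjI, simp, rule exI[of _ C], intro allI impI)
        fix \<sigma> :: real and A :: "complex \<Rightarrow> complex"
        assume H: "0 < \<sigma> \<and> \<sigma> < 1/2 \<and> A holomorphic_on strip \<delta> \<and> bounded (A ` strip \<delta>)"
        then have \<sigma>: "0 < \<sigma>" "\<sigma> < 1/2" and hol: "A holomorphic_on strip \<delta>" and bnd: "bounded (A ` strip \<delta>)" by auto
        define M where "M = (SUP p\<in>strip \<delta>. cmod (A p))"
        have Mb: "\<forall>z\<in>strip \<delta>. cmod (A z) \<le> M"
        proof
          fix z assume z: "z \<in> strip \<delta>"
          have "bdd_above (norm ` A ` strip \<delta>)" using bnd by (simp add: bdd_above_norm)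
          then have "bdd_above ((\<lambda>p. cmod (A p)) ` strip \<delta>)" by (simp add: image_image)
          then show "cmod (A z) \<le> M" unfolding M_def using z by (rule cSUP_upper[rotated])
        qed
        have Ct: "integrable lborel (Kf \<beta> b a k \<sigma> (\<epsilon> * Y t) (\<epsilon> * X t) A)
     \<and> (\<forall>p. cmod (Kf \<beta> b a k \<sigma> (\<epsilon> * Y t) (\<epsilon> * X t) A p) \<le> Cgb a k (lam1 \<beta> b k) * exp (\<epsilon> * Xm * \<delta>) / (lam1 \<beta> b k * \<sigma>^2) * M / (1 + p^2))
     \<and> cmod ((LINT p|lborel. Kf \<beta> b a k \<sigma> (\<epsilon> * Y t) (\<epsilon> * X t) A p)
          - complex_of_real (gfun \<beta> b a (lam1 \<beta> b k) (\<epsilon> * Y t) k * pi * q1 \<beta> b k / (lam1 \<beta> b k * \<sigma>)) * A 0) \<le> C * M"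
          if t: "t \<in> {-pi..pi}" for t
          by (rule C) (use \<sigma> yb[OF t] xb[OF t] hol Mb in auto)
        have Kint_eq: "Kint \<beta> b k a \<epsilon> X Y (Lam1 \<beta> b k * (1 - \<sigma>^2)) A t = Kf \<beta> b a k \<sigma> (\<epsilon> * Y t) (\<epsilon> * X t) A" for t
          by (rule ext) (rule Kint_Kf)
        have T0eq: "T0hat \<beta> b k a \<epsilon> X Y \<sigma> A t = (LINT p|lborel. Kf \<beta> b a k \<sigma> (\<epsilon> * Y t) (\<epsilon> * X t) A p)
          - complex_of_real (gfun \<beta> b a (lam1 \<beta> b k) (\<epsilon> * Y t) k * pi * q1 \<beta> b k / (lam1 \<beta> b k * \<sigma>)) * A 0" for t
          unfolding T0hat_def Khat_def Kint_eq R0_eq[OF bas(1-4) \<sigma>(1)] ..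
        show "(\<forall>t\<in>{-pi..pi}. integrable lborel (Kint \<beta> b k a \<epsilon> X Y (Lam1 \<beta> b k * (1 - \<sigma>^2)) A t))
               \<and> continuous_on {-pi..pi} (T0hat \<beta> b k a \<epsilon> X Y \<sigma> A)
               \<and> (\<forall>t\<in>{-pi..pi}. cmod (T0hat \<beta> b k a \<epsilon> X Y \<sigma> A t) \<le> C * (SUP p\<in>strip \<delta>. cmod (A p)))"
        proof (intro conjI ballI)
          fix t :: real assume t: "t \<in> {-pi..pi}"
          show "integrable lborel (Kint \<beta> b k a \<epsilon> X Y (Lam1 \<beta> b k * (1 - \<sigma>^2)) A t)"
            unfolding Kint_eq using Ct[OF t] by blast
          show "cmod (T0hat \<beta> b k a \<epsilon> X Y \<sigma> A t) \<le> C * (SUP p\<in>strip \<delta>. cmod (A p))"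
            unfolding T0eq M_def[symmetric] using Ct[OF t] by blast
        next
          define Dd where "Dd = Cgb a k (lam1 \<beta> b k) * exp (\<epsilon> * Xm * \<delta>) / (lam1 \<beta> b k * \<sigma>^2) * M"
          define I where "I t = (LINT p|lborel. Kf \<beta> b a k \<sigma> (\<epsilon> * Y t) (\<epsilon> * X t) A p)" for t
          define c where "c t = complex_of_real (gfun \<beta> b a (lam1 \<beta> b k) (\<epsilon> * Y t) k * pi * q1 \<beta> b k / (lam1 \<beta> b k * \<sigma>)) * A 0" for t
          have e: "T0hat \<beta> b k a \<epsilon> X Y \<sigma> A = (\<lambda>t. I t - c t)"
            by (rule ext) (simp add: T0eq I_def c_def)
          have Lp: "0 < lam1 \<beta> b k" "lam1 \<beta> b k < k" using Lam_props[OF bas(1-4)] by auto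
          have pp: "\<And>x. 1 + \<beta> * tanh x \<noteq> 0" using onepbT_pos[OF bas(1,2)] by (metis less_irrefl)
          have mm: "\<And>x. 1 - \<beta> * tanh x \<noteq> 0" using onembT_pos[OF bas(1,2)] by (metis less_irrefl)
          have cc: "continuous_on {-pi..pi} c"
          proof -
            define K1 where "K1 = P0 \<beta> b k (lam1 \<beta> b k) / (2 * pi * (k - lam1 \<beta> b k)) * pi * q1 \<beta> b k / (lam1 \<beta> b k * \<sigma>)"
            have ce: "c = (\<lambda>t. complex_of_real (K1 * exp (- (a - \<epsilon> * Y t) * k)) * A 0)"
              by (rule ext) (simp add: c_def gfun_def K1_def field_simps)
            have "continuous_on {-pi..pi} (\<lambda>t. complex_of_real (K1 * exp (- (a - \<epsilon> * Y t) * k)) * A 0)"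
              by (intro continuous_intros continuous_on_subset[OF Yc]) auto
            then show ?thesis unfolding ce .
          qed
          have ci: "continuous_on {-pi..pi} I"
            unfolding continuous_on_sequentially
          proof (intro allI ballI impI)
            fix xs :: "nat \<Rightarrow> real" and t0 assume t0: "t0 \<in> {-pi..pi}" and xs: "(\<forall>n. xs n \<in> {-pi..pi}) \<and> xs \<longlonglongrightarrow> t0"
            have "(\<lambda>i. LINT p|lborel. Kf \<beta> b a k \<sigma> (\<epsilon> * Y (xs i)) (\<epsilon> * X (xs i)) A p)
                 \<longlonglongrightarrow> (LINT p|lborel. Kf \<beta> b a k \<sigma> (\<epsilon> * Y t0) (\<epsilon> * X t0) A p)"
            proof (rule integral_dominated_convergence[where w="\<lambda>p. Dd * (1 / (1 + p^2))"])
              show "Kf \<beta> b a k \<sigma> (\<epsilon> * Y t0) (\<epsilon> * X t0) A \<in> borel_measurable lborel"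
                using Ct[OF t0] by (blast intro: borel_measurable_integrable)
              show "Kf \<beta> b a k \<sigma> (\<epsilon> * Y (xs i)) (\<epsilon> * X (xs i)) A \<in> borel_measurable lborel" for i
                using Ct[of "xs i"] xs by (blast intro: borel_measurable_integrable)
              show "integrable lborel (\<lambda>p. Dd * (1 / (1 + p^2)))" by (rule integrable_mult_right[OF cauchy_int(1)])
              show "AE p in lborel. (\<lambda>i. Kf \<beta> b a k \<sigma> (\<epsilon> * Y (xs i)) (\<epsilon> * X (xs i)) A p) \<longlonglongrightarrow> Kf \<beta> b a k \<sigma> (\<epsilon> * Y t0) (\<epsilon> * X t0) A p"
              proof (rule AE_I2)
                fix p :: real
                have "isCont (\<lambda>t. Kf \<beta> b a k \<sigma> (\<epsilon> * Y t) (\<epsilon> * X t) A p) t0"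
                  using Kf_t_cont[OF Xc Yc] by (simp add: continuous_on_eq_continuous_at)
                then show "(\<lambda>i. Kf \<beta> b a k \<sigma> (\<epsilon> * Y (xs i)) (\<epsilon> * X (xs i)) A p) \<longlonglongrightarrow> Kf \<beta> b a k \<sigma> (\<epsilon> * Y t0) (\<epsilon> * X t0) A p"
                  using xs by (intro isCont_tendsto_compose[where g="\<lambda>t. Kf \<beta> b a k \<sigma> (\<epsilon> * Y t) (\<epsilon> * X t) A p"]) auto
              qed
              show "AE p in lborel. norm (Kf \<beta> b a k \<sigma> (\<epsilon> * Y (xs i)) (\<epsilon> * X (xs i)) A p) \<le> Dd * (1 / (1 + p^2))" for i
              proof (rule AE_I2)
                fix p :: real
                show "norm (Kf \<beta> b a k \<sigma> (\<epsilon> * Y (xs i)) (\<epsilon> * X (xs i)) A p) \<le> Dd * (1 / (1 + p^2))"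
                  using Ct[of "xs i"] xs by (simp add: Dd_def)
              qed
            qed
            then show "(I \<circ> xs) \<longlonglongrightarrow> I t0" by (simp add: I_def comp_def)
          qed
          show "continuous_on {-pi..pi} (T0hat \<beta> b k a \<epsilon> X Y \<sigma> A)"
            unfolding e by (intro continuous_intros ci cc)
        qed
      qed
    qed
  qed
qed


end
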